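(* Let the setting be as in the context, with $\mathsf Z\subset\mathbb R^m$ Borel. Suppose Assumption (A) holds with data $(g,n,\bar m,d)$, let $m',d'>0$ satisfy $\bar m+2m'>1$, $\beta(\bar m+2m')<1$, $d'\ge d/(\bar m+2m'-1)$, let $\ell$ be the associated weight function, and set $k_1:=r$, $k_2:=\ell$. Suppose, for each $i=1,\dots,m$: (a) $P$ has a density representation $f$, $D_i^2f(z'|z)$ exists for all $(z,z')\in\operatorname{int}(\mathsf Z)\times\mathsf Z$, and $(z,z')\mapsto D_if(z'|z)$ is continuous; (b) for every $z'$ and $z^{-i}$, the equation $D_i^2f(z'|z)=0$ has finitely many solutions in $z^i$ (denote them $z_i^*(z',z^{-i})$), and for every $z_0\in\operatorname{int}(\mathsf Z)$ there exist $\delta>0$ and a compact $A\subset\mathsf Z$ such that $z'\notin A$ implies that no solution $z_i^*(z',z_0^{-i})$ lies in $B_\delta(z_0^i)$; (c) $D_ic(z)$ exists on $\operatorname{int}(\mathsf Z)$ and $z\mapsto D_ic(z)$ is continuous on $\operatorname{int}(\mathsf Z)$; (d) for $j=1,2$, $k_j$ is continuous and $z\mapsto\int|k_j(z')D_if(z'|z)|dz'$ is finite and continuous on $\operatorname{int}(\mathsf Z)$. Then for $i=1,\dots,m$, $D_i\psi^*$ exists and $z\mapsto D_i\psi^*(z)$ is continuous on $\operatorname{int}(\mathsf Z)$.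
   Context: $P$ is a stochastic kernel on $(\mathsf Z,\mathscr Z)$, $P^0(z,\cdot)=\delta_z$, $P^n(z,B)=\int P(z',B)P^{n-1}(z,dz')$; $(Z_t)$ is a time-homogeneous Markov process with kernel $P$ adapted to a filtration; $\mathbb E_z h(Z_t)=\int h\,dP^t(z,\cdot)$. $\mathscr M$ is the set of a.s. finite $\mathbb N_0$-valued stopping times. $\beta\in(0,1)$; $r,c:\mathsf Z\to\mathbb R$ measurable. $v^*(z)=\sup_{\tau\in\mathscr M}\mathbb E_z\{\sum_{t=0}^{\tau-1}\beta^tc(Z_t)+\beta^\tau r(Z_\tau)\}$, $\psi^*(z)=c(z)+\beta\int v^*(z')P(z,dz')$. Assumption (A): there exist measurable $g:\mathsf Z\to\mathbb R_+$, $n\in\mathbb N_0$, $\bar m,d\ge0$ with $\beta\bar m<1$ such that $\max\{\int|r|dP^n(z,\cdot),\int|c|dP^n(z,\cdot)\}\le g(z)$ and $\int g(z')P(z,dz')\le\bar mg(z)+d$ for all $z$. $\ell(z)=m'\big(\sum_{t=1}^{n-1}\mathbb E_z|r(Z_t)|+\sum_{t=0}^{n-1}\mathbb E_z|c(Z_t)|\big)+g(z)+d'$. Notation: $z=(z^1,\dots,z^m)$, $z^{-i}$ the other coordinates; $D_i$, $D_i^2$ are first and second partial derivatives w.r.t. $z^i$ (for $f(z'|z)$, w.r.t. the conditioning variable); $B_\delta(z_0^i)=\{z^i:|z^i-z_0^i|<\delta\}$; a density representation means $P(z,B)=\int_Bf(z'|z)dz'$. *)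

theory Defs
  imports "HOL-Probability.Probability"
begin

definition upd :: "real ^ 'm \<Rightarrow> 'm \<Rightarrow> real \<Rightarrow> real ^ 'm" where
  "upd z i t = (\<chi> j. if j = i then t else z $ j)"

definition Dp_ex :: "'m \<Rightarrow> (real ^ 'm \<Rightarrow> real) \<Rightarrow> real ^ 'm \<Rightarrow> bool" where
  "Dp_ex i h z \<longleftrightarrow> (\<lambda>t. h (upd z i t)) differentiable (at (z $ i))"

definition Dp :: "'m \<Rightarrow> (real ^ 'm \<Rightarrow> real) \<Rightarrow> real ^ 'm \<Rightarrow> real" where
  "Dp i h z = deriv (\<lambda>t. h (upd z i t)) (z $ i)"

definition Dp2_ex :: "'m \<Rightarrow> (real ^ 'm \<Rightarrow> real) \<Rightarrow> real ^ 'm \<Rightarrow> bool" where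
  "Dp2_ex i h z \<longleftrightarrow> (\<forall>\<^sub>F t in nhds (z $ i). Dp_ex i h (upd z i t)) \<and> Dp_ex i (Dp i h) z"

fun kpow :: "('a \<Rightarrow> 'a measure) \<Rightarrow> 'a measure \<Rightarrow> nat \<Rightarrow> 'a \<Rightarrow> 'a measure" where
  "kpow P S 0 z = return S z"
| "kpow P S (Suc n) z = bind (kpow P S n z) P"

definition vstar :: "('a \<Rightarrow> 'w measure) \<Rightarrow> (nat \<Rightarrow> 'w measure) \<Rightarrow> (nat \<Rightarrow> 'w \<Rightarrow> 'a)
    \<Rightarrow> real \<Rightarrow> ('a \<Rightarrow> real) \<Rightarrow> ('a \<Rightarrow> real) \<Rightarrow> 'a \<Rightarrow> real" where
  "vstar M F Z \<beta> r c z =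
     (SUP \<tau> \<in> {\<tau>. stopping_time F \<tau>}.
        integral\<^sup>L (M z) (\<lambda>\<omega>. (\<Sum>t<\<tau> \<omega>. \<beta> ^ t * c (Z t \<omega>)) + \<beta> ^ (\<tau> \<omega>) * r (Z (\<tau> \<omega>) \<omega>)))"

definition psistar :: "('a \<Rightarrow> 'a measure) \<Rightarrow> ('a \<Rightarrow> 'w measure) \<Rightarrow> (nat \<Rightarrow> 'w measure)
    \<Rightarrow> (nat \<Rightarrow> 'w \<Rightarrow> 'a) \<Rightarrow> real \<Rightarrow> ('a \<Rightarrow> real) \<Rightarrow> ('a \<Rightarrow> real) \<Rightarrow> 'a \<Rightarrow> real" where
  "psistar P M F Z \<beta> r c z = c z + \<beta> * integral\<^sup>L (P z) (vstar M F Z \<beta> r c)"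

text \<open>Weight function ell (valued in [0,infinity]), with E_z h(Z_t) = integral of h w.r.t. P^t(z,.).\<close>
definition ell :: "('a \<Rightarrow> 'a measure) \<Rightarrow> 'a measure \<Rightarrow> nat \<Rightarrow> real \<Rightarrow> real \<Rightarrow> ('a \<Rightarrow> real)
    \<Rightarrow> ('a \<Rightarrow> real) \<Rightarrow> ('a \<Rightarrow> real) \<Rightarrow> 'a \<Rightarrow> ennreal" where
  "ell P S n m' d' g r c z =
     ennreal m' * ((\<Sum>t\<in>{1..<n}. \<integral>\<^sup>+ z'. ennreal \<bar>r z'\<bar> \<partial>(kpow P S t z))
                  + (\<Sum>t<n. \<integral>\<^sup>+ z'. ennreal \<bar>c z'\<bar> \<partial>(kpow P S t z)))
     + ennreal (g z) + ennreal d'"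

end

theory Submission
  imports Defs
begin


lemma kpow_meas:
  assumes "P \<in> S \<rightarrow>\<^sub>M prob_algebra S"
  shows "kpow P S t \<in> S \<rightarrow>\<^sub>M prob_algebra S"
proof (induction t)
  case 0
  have "kpow P S 0 = return S" by (rule ext) simp
  then show ?case by simp
next
  case (Suc t)
  have "kpow P S (Suc t) = (\<lambda>z. bind (kpow P S t z) P)" by (rule ext) simp
  then show ?case using measurable_bind_prob_space[OF Suc assms] by simp
qed

lemma kpow_space:
  assumes "P \<in> S \<rightarrow>\<^sub>M prob_algebra S" "z \<in> space S"
  shows "sets (kpow P S t z) = sets S" "prob_space (kpow P S t z)" "space (kpow P S t z) = space S"
  using measurable_space[OF kpow_meas[OF assms(1)] assms(2), of t]
  by (auto simp: space_prob_algebra intro!: sets_eq_imp_space_eq)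

lemma kpow_add:
  assumes P: "P \<in> S \<rightarrow>\<^sub>M prob_algebra S" and z: "z \<in> space S"
  shows "bind (kpow P S a z) (kpow P S b) = kpow P S (a+b) z"
proof (induction b)
  case 0
  have "kpow P S 0 = return S" by (rule ext) simp
  then show ?case using kpow_space[OF P z] by (simp add: bind_return'')
next
  case (Suc b)
  have "kpow P S (a + Suc b) z = bind (kpow P S (a+b) z) P" by simp
  also have "\<dots> = bind (bind (kpow P S a z) (kpow P S b)) P" using Suc by simp
  also have "\<dots> = bind (kpow P S a z) (\<lambda>x. bind (kpow P S b x) P)"
  proof -
    have m: "kpow P S b \<in> kpow P S a z \<rightarrow>\<^sub>M subprob_algebra S"
      using measurable_prob_algebraD[OF kpow_meas[OF P, of b]] kpow_space(1)[OF P z, of a]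
      by (simp cong: measurable_cong_sets)
    show ?thesis by (rule bind_assoc[OF m measurable_prob_algebraD[OF P]])
  qed
  also have "\<dots> = bind (kpow P S a z) (kpow P S (Suc b))"
  proof -
    have "kpow P S (Suc b) = (\<lambda>x. bind (kpow P S b x) P)" by (rule ext) simp
    then show ?thesis by simp
  qed
  finally show ?case by (rule sym)
qed

lemma kpow_one:
  assumes P: "P \<in> S \<rightarrow>\<^sub>M prob_algebra S" and z: "z \<in> space S"
  shows "kpow P S 1 z = P z"
  using bind_return[OF measurable_prob_algebraD[OF P] z] by simp

lemma kpow_Suc':
  assumes P: "P \<in> S \<rightarrow>\<^sub>M prob_algebra S" and z: "z \<in> space S"
  shows "bind (P z) (kpow P S t) = kpow P S (Suc t) z"
  using kpow_add[OF P z, of 1 t] kpow_one[OF P z] by simp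


locale mk =
  fixes S :: "'a measure" and P :: "'a \<Rightarrow> 'a measure" and M :: "'a \<Rightarrow> 'w measure"
    and F :: "nat \<Rightarrow> 'w measure" and Z :: "nat \<Rightarrow> 'w \<Rightarrow> 'a"
  assumes kernel: "P \<in> S \<rightarrow>\<^sub>M prob_algebra S"
    and prob: "\<And>z. z \<in> space S \<Longrightarrow> prob_space (M z)"
    and filt: "\<And>z. z \<in> space S \<Longrightarrow> filtration (space (M z)) F \<and> (\<forall>t. subalgebra (M z) (F t))"
    and adapted: "\<And>t. Z t \<in> F t \<rightarrow>\<^sub>M S"
    and init: "\<And>z. z \<in> space S \<Longrightarrow> AE \<omega> in M z. Z 0 \<omega> = z"
    and trans: "\<And>z t B. z \<in> space S \<Longrightarrow> B \<in> sets S \<Longrightarrow> AE \<omega> in M z.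
           real_cond_exp (M z) (F t) (\<lambda>\<omega>. indicator B (Z (Suc t) \<omega>)) \<omega> = measure (P (Z t \<omega>)) B"
begin

lemma Zmeas: "z \<in> space S \<Longrightarrow> Z t \<in> M z \<rightarrow>\<^sub>M S"
  using measurable_from_subalg[OF _ adapted] filt by blast

lemma kpow_in: "z \<in> space S \<Longrightarrow> kpow P S t z \<in> space (prob_algebra S)"
  using measurable_space[OF kpow_meas[OF kernel]] by blast

lemma distrZ:
  assumes z: "z \<in> space S"
  shows "distr (M z) S (Z t) = kpow P S t z"
proof (induction t)
  case 0
  interpret prob_space "M z" using prob[OF z] .
  show ?case
  proof (rule measure_eqI)
    show "sets (distr (M z) S (Z 0)) = sets (kpow P S 0 z)" by simp
    fix B assume B: "B \<in> sets (distr (M z) S (Z 0))"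
    then have B': "B \<in> sets S" by simp
    have "emeasure (distr (M z) S (Z 0)) B = emeasure (M z) (Z 0 -` B \<inter> space (M z))"
      using B' Zmeas[OF z] by (simp add: emeasure_distr)
    also have "\<dots> = emeasure (M z) (if z \<in> B then space (M z) else {})"
      by (rule emeasure_eq_AE) (use init[OF z] measurable_sets[OF Zmeas[OF z] B'] in auto)
    also have "\<dots> = indicator B z" by (simp add: emeasure_space_1)
    finally show "emeasure (distr (M z) S (Z 0)) B = emeasure (kpow P S 0 z) B"
      using B' by simp
  qed
next
  case (Suc t)
  interpret prob_space "M z" using prob[OF z] .
  have subalg: "subalgebra (M z) (F t)" using filt[OF z] by blast
  have sfs: "sigma_finite_subalgebra (M z) (F t)"
    by (rule finite_measure_subalgebra_is_sigma_finite)
       (simp add: finite_measure_subalgebra_def finite_measure_subalgebra_axioms_def subalg finite_measure_axioms)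
  have kin: "kpow P S t z \<in> space (prob_algebra S)" by (rule kpow_in[OF z])
  interpret K: prob_space "kpow P S t z" using kpow_space(2)[OF kernel z] .
  interpret D: prob_space "distr (M z) S (Z (Suc t))" by (rule prob_space_distr[OF Zmeas[OF z]])
  interpret B: prob_space "kpow P S (Suc t) z" using kpow_space(2)[OF kernel z] .
  show ?case
  proof (rule measure_eqI)
    show "sets (distr (M z) S (Z (Suc t))) = sets (kpow P S (Suc t) z)"
      using kpow_space(1)[OF kernel z, of "Suc t"] by (simp del: kpow.simps)
    fix A assume A: "A \<in> sets (distr (M z) S (Z (Suc t)))"
    then have A': "A \<in> sets S" by simp
    have mP: "(\<lambda>x. measure (P x) A) \<in> borel_measurable S"
      using measurable_measure_prob_algebra[OF A'] kernel by measurable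
    have "measure (distr (M z) S (Z (Suc t))) A = measure (M z) (Z (Suc t) -` A \<inter> space (M z))"
      using A' Zmeas[OF z] by (simp add: measure_distr)
    also have "\<dots> = (\<integral>\<omega>. indicator A (Z (Suc t) \<omega>) \<partial>M z)"
    proof -
      have "(\<lambda>\<omega>. indicator A (Z (Suc t) \<omega>) :: real) = indicator (Z (Suc t) -` A)"
        by (auto simp: indicator_def)
      then show ?thesis by (simp add: Int_commute)
    qed
    also have "\<dots> = (\<integral>\<omega>. real_cond_exp (M z) (F t) (\<lambda>\<omega>. indicator A (Z (Suc t) \<omega>)) \<omega> \<partial>M z)"
    proof -
      have "integrable (M z) (\<lambda>\<omega>. indicator A (Z (Suc t) \<omega>) :: real)"
        by (rule integrable_const_bound[where B=1])
           (use measurable_compose[OF Zmeas[OF z] borel_measurable_indicator[OF A']] in auto)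
      then show ?thesis using sigma_finite_subalgebra.real_cond_exp_int(2)[OF sfs] by metis
    qed
    also have "\<dots> = (\<integral>\<omega>. measure (P (Z t \<omega>)) A \<partial>M z)"
      by (rule integral_cong_AE) (use trans[OF z A'] measurable_compose[OF Zmeas[OF z] mP] in auto)
    also have "\<dots> = (\<integral>x. measure (P x) A \<partial>distr (M z) S (Z t))"
      by (rule integral_distr[symmetric, OF Zmeas[OF z] mP])
    also have "\<dots> = (\<integral>x. measure (P x) A \<partial>kpow P S t z)" using Suc by simp
    also have "\<dots> = measure (kpow P S (Suc t) z) A"
    proof -
      have "emeasure (kpow P S (Suc t) z) A = (\<integral>\<^sup>+x. emeasure (P x) A \<partial>kpow P S t z)"
        using emeasure_bind_prob_algebra[OF kin kernel A'] by simp
      also have "\<dots> = (\<integral>\<^sup>+x. ennreal (measure (P x) A) \<partial>kpow P S t z)"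
      proof (rule nn_integral_cong)
        fix x assume "x \<in> space (kpow P S t z)"
        then have "x \<in> space S" using kpow_space(3)[OF kernel z] by simp
        then have "prob_space (P x)" using measurable_space[OF kernel] by (auto simp: space_prob_algebra)
        then show "emeasure (P x) A = ennreal (measure (P x) A)"
          by (simp add: prob_space_def finite_measure.emeasure_eq_measure)
      qed
      also have "\<dots> = ennreal (\<integral>x. measure (P x) A \<partial>kpow P S t z)"
      proof (rule nn_integral_eq_integral)
        show "integrable (kpow P S t z) (\<lambda>x. measure (P x) A)"
        proof (rule K.integrable_const_bound[where B=1])
          show "AE x in kpow P S t z. norm (measure (P x) A) \<le> 1"
          proof (rule AE_I2)
            fix x assume "x \<in> space (kpow P S t z)"
            then have "x \<in> space S" using kpow_space(3)[OF kernel z] by simp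
            then have "prob_space (P x)" using measurable_space[OF kernel] by (auto simp: space_prob_algebra)
            then show "norm (measure (P x) A) \<le> 1" by (simp add: prob_space.prob_le_1)
          qed
        qed (use mP kpow_space(1)[OF kernel z] in \<open>auto cong: measurable_cong_sets\<close>)
      qed auto
      finally show ?thesis by (simp add: measure_def integral_nonneg del: kpow.simps)
    qed
    finally have "measure (distr (M z) S (Z (Suc t))) A = measure (kpow P S (Suc t) z) A" .
    then show "emeasure (distr (M z) S (Z (Suc t))) A = emeasure (kpow P S (Suc t) z) A"
      by (metis D.emeasure_eq_measure B.emeasure_eq_measure)
  qed
qed

end


definition Bf :: "('a \<Rightarrow> 'a measure) \<Rightarrow> 'a measure \<Rightarrow> real \<Rightarrow> ('a \<Rightarrow> real) \<Rightarrow> ('a \<Rightarrow> real) \<Rightarrow> 'a \<Rightarrow> ennreal" where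
  "Bf P S \<beta> r c z = (\<Sum>t. ennreal (\<beta>^t) * ((\<integral>\<^sup>+x. ennreal \<bar>c x\<bar> \<partial>kpow P S t z) + (\<integral>\<^sup>+x. ennreal \<bar>r x\<bar> \<partial>kpow P S t z)))"

lemma payoff_real:
  fixes \<beta> :: real and a b :: "nat \<Rightarrow> real"
  assumes "0 \<le> \<beta>"
  shows "\<bar>(\<Sum>t<k. \<beta>^t * a t) + \<beta>^k * b k\<bar> \<le> (\<Sum>t<Suc k. \<beta>^t * (\<bar>a t\<bar> + \<bar>b t\<bar>))"
proof -
  have "\<bar>(\<Sum>t<k. \<beta>^t * a t) + \<beta>^k * b k\<bar> \<le> (\<Sum>t<k. \<bar>\<beta>^t * a t\<bar>) + \<bar>\<beta>^k * b k\<bar>"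
    by (rule order_trans[OF abs_triangle_ineq add_mono[OF sum_abs order_refl]])
  also have "\<dots> = (\<Sum>t<k. \<beta>^t * \<bar>a t\<bar>) + \<beta>^k * \<bar>b k\<bar>"
    using assms by (simp add: abs_mult)
  also have "\<dots> \<le> (\<Sum>t<k. \<beta>^t * (\<bar>a t\<bar> + \<bar>b t\<bar>)) + \<beta>^k * (\<bar>a k\<bar> + \<bar>b k\<bar>)"
    using assms by (intro add_mono sum_mono mult_left_mono) auto
  also have "\<dots> = (\<Sum>t<Suc k. \<beta>^t * (\<bar>a t\<bar> + \<bar>b t\<bar>))" by simp
  finally show ?thesis .
qed

lemma payoff_enn:
  fixes \<beta> :: real and a b :: "nat \<Rightarrow> real"
  assumes "0 \<le> \<beta>"
  shows "ennreal \<bar>(\<Sum>t<k. \<beta>^t * a t) + \<beta>^k * b k\<bar> \<le> (\<Sum>t. ennreal (\<beta>^t) * (ennreal \<bar>a t\<bar> + ennreal \<bar>b t\<bar>))"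
proof -
  have "ennreal \<bar>(\<Sum>t<k. \<beta>^t * a t) + \<beta>^k * b k\<bar> \<le> ennreal (\<Sum>t<Suc k. \<beta>^t * (\<bar>a t\<bar> + \<bar>b t\<bar>))"
    by (rule ennreal_leI[OF payoff_real[OF assms]])
  also have "\<dots> = (\<Sum>t<Suc k. ennreal (\<beta>^t) * (ennreal \<bar>a t\<bar> + ennreal \<bar>b t\<bar>))"
    using assms by (subst sum_ennreal[symmetric]) (auto simp: ennreal_mult ennreal_plus)
  also have "\<dots> \<le> (\<Sum>t. ennreal (\<beta>^t) * (ennreal \<bar>a t\<bar> + ennreal \<bar>b t\<bar>))"
    by (rule sum_le_suminf) auto
  finally show ?thesis .
qed

context mk begin

lemma nnexp:
  assumes z: "z \<in> space S" and h: "h \<in> borel_measurable S"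
  shows "(\<integral>\<^sup>+\<omega>. h (Z t \<omega>) \<partial>M z) = (\<integral>\<^sup>+x. h x \<partial>kpow P S t z)"
proof -
  have "h \<in> borel_measurable (distr (M z) S (Z t))" using h by simp
  then show ?thesis using nn_integral_distr[OF Zmeas[OF z], of h] distrZ[OF z, of t] h by metis
qed

lemma payoff_nn:
  assumes z: "z \<in> space S" and \<beta>: "0 \<le> \<beta>"
    and r: "r \<in> borel_measurable S" and c: "c \<in> borel_measurable S"
  shows "(\<integral>\<^sup>+\<omega>. ennreal \<bar>(\<Sum>t<\<tau> \<omega>. \<beta>^t * c (Z t \<omega>)) + \<beta>^(\<tau> \<omega>) * r (Z (\<tau> \<omega>) \<omega>)\<bar> \<partial>M z)
         \<le> Bf P S \<beta> r c z"
proof -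
  have "(\<integral>\<^sup>+\<omega>. ennreal \<bar>(\<Sum>t<\<tau> \<omega>. \<beta>^t * c (Z t \<omega>)) + \<beta>^(\<tau> \<omega>) * r (Z (\<tau> \<omega>) \<omega>)\<bar> \<partial>M z)
      \<le> (\<integral>\<^sup>+\<omega>. (\<Sum>t. ennreal (\<beta>^t) * (ennreal \<bar>c (Z t \<omega>)\<bar> + ennreal \<bar>r (Z t \<omega>)\<bar>)) \<partial>M z)"
    by (rule nn_integral_mono) (rule payoff_enn[OF \<beta>, of "\<lambda>t. c (Z t _)" "\<tau> _" "\<lambda>t. r (Z t _)"])
  also have "\<dots> = (\<Sum>t. \<integral>\<^sup>+\<omega>. ennreal (\<beta>^t) * (ennreal \<bar>c (Z t \<omega>)\<bar> + ennreal \<bar>r (Z t \<omega>)\<bar>) \<partial>M z)"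
    by (rule nn_integral_suminf) (use Zmeas[OF z] r c in measurable)
  also have "\<dots> = Bf P S \<beta> r c z"
    unfolding Bf_def
  proof (rule suminf_cong)
    fix t
    have "(\<integral>\<^sup>+\<omega>. ennreal (\<beta>^t) * (ennreal \<bar>c (Z t \<omega>)\<bar> + ennreal \<bar>r (Z t \<omega>)\<bar>) \<partial>M z)
       = ennreal (\<beta>^t) * ((\<integral>\<^sup>+\<omega>. ennreal \<bar>c (Z t \<omega>)\<bar> \<partial>M z) + (\<integral>\<^sup>+\<omega>. ennreal \<bar>r (Z t \<omega>)\<bar> \<partial>M z))"
      by (subst nn_integral_cmult) (use Zmeas[OF z] r c in \<open>auto intro!: nn_integral_add arg_cong2[where f="(*)"]\<close>)
    also have "\<dots> = ennreal (\<beta>^t) * ((\<integral>\<^sup>+x. ennreal \<bar>c x\<bar> \<partial>kpow P S t z) + (\<integral>\<^sup>+x. ennreal \<bar>r x\<bar> \<partial>kpow P S t z))"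
      using nnexp[OF z, of "\<lambda>x. ennreal \<bar>c x\<bar>" t] nnexp[OF z, of "\<lambda>x. ennreal \<bar>r x\<bar>" t] r c by simp
    finally show "(\<integral>\<^sup>+\<omega>. ennreal (\<beta>^t) * (ennreal \<bar>c (Z t \<omega>)\<bar> + ennreal \<bar>r (Z t \<omega>)\<bar>) \<partial>M z)
       = ennreal (\<beta>^t) * ((\<integral>\<^sup>+x. ennreal \<bar>c x\<bar> \<partial>kpow P S t z) + (\<integral>\<^sup>+x. ennreal \<bar>r x\<bar> \<partial>kpow P S t z))" .
  qed
  finally show ?thesis .
qed

lemma vstar_bounds:
  assumes z: "z \<in> space S" and \<beta>: "0 \<le> \<beta>"
    and r: "r \<in> borel_measurable S" and c: "c \<in> borel_measurable S"
    and fin: "Bf P S \<beta> r c z < \<infinity>"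
  shows "r z \<le> vstar M F Z \<beta> r c z" "vstar M F Z \<beta> r c z \<le> enn2real (Bf P S \<beta> r c z)"
proof -
  interpret prob_space "M z" using prob[OF z] .
  let ?pay = "\<lambda>\<tau> \<omega>. (\<Sum>t<\<tau> \<omega>. \<beta>^t * c (Z t \<omega>)) + \<beta>^(\<tau> \<omega>) * r (Z (\<tau> \<omega>) \<omega>)"
  have ub: "integral\<^sup>L (M z) (?pay \<tau>) \<le> enn2real (Bf P S \<beta> r c z)" for \<tau>
  proof (cases "integrable (M z) (?pay \<tau>)")
    case True
    have "ennreal (integral\<^sup>L (M z) (?pay \<tau>)) \<le> ennreal (norm (integral\<^sup>L (M z) (?pay \<tau>)))"
      by (rule ennreal_leI) simp
    also have "\<dots> \<le> (\<integral>\<^sup>+\<omega>. norm (?pay \<tau> \<omega>) \<partial>M z)"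
      by (rule integral_norm_bound_ennreal[OF True])
    also have "\<dots> \<le> Bf P S \<beta> r c z" using payoff_nn[OF z \<beta> r c, of \<tau>] by simp
    finally have le: "ennreal (integral\<^sup>L (M z) (?pay \<tau>)) \<le> Bf P S \<beta> r c z" .
    show ?thesis
    proof (cases "integral\<^sup>L (M z) (?pay \<tau>) \<le> 0")
      case True then show ?thesis using enn2real_nonneg[of "Bf P S \<beta> r c z"] by linarith
    next
      case False
      have "enn2real (ennreal (integral\<^sup>L (M z) (?pay \<tau>))) \<le> enn2real (Bf P S \<beta> r c z)"
        by (rule enn2real_mono[OF le]) (use fin in simp)
      then show ?thesis using False by simp
    qed
  next
    case False
    then show ?thesis by (simp add: not_integrable_integral_eq)
  qed
  have ne: "{\<tau>. stopping_time F \<tau>} \<noteq> {}" using stopping_time_const by blast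
  have bdd: "bdd_above ((\<lambda>\<tau>. integral\<^sup>L (M z) (?pay \<tau>)) ` {\<tau>. stopping_time F \<tau>})"
    using ub by (intro bdd_aboveI) auto
  show "vstar M F Z \<beta> r c z \<le> enn2real (Bf P S \<beta> r c z)"
    unfolding vstar_def by (rule cSUP_least[OF ne]) (rule ub)
  have "integral\<^sup>L (M z) (?pay (\<lambda>_. 0)) = r z"
  proof -
    have "integral\<^sup>L (M z) (?pay (\<lambda>_. 0)) = integral\<^sup>L (M z) (\<lambda>_. r z)"
      by (rule integral_cong_AE) (use init[OF z] measurable_compose[OF Zmeas[OF z] r] in auto)
    then show ?thesis by (simp add: prob_space)
  qed
  moreover have "integral\<^sup>L (M z) (?pay (\<lambda>_. 0)) \<le> vstar M F Z \<beta> r c z"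
    unfolding vstar_def by (rule cSUP_upper2[OF bdd, of "\<lambda>_. 0"]) (auto intro: stopping_time_const)
  ultimately show "r z \<le> vstar M F Z \<beta> r c z" by simp
qed

end


locale mk2 = mk +
  fixes \<beta> :: real and r c g :: "'a \<Rightarrow> real" and n :: nat and mbar d m' d' :: real
  assumes beta: "0 < \<beta>" "\<beta> < 1"
    and r_meas: "r \<in> borel_measurable S" and c_meas: "c \<in> borel_measurable S"
    and g_meas: "g \<in> borel_measurable S" and g_nn: "\<And>z. 0 \<le> g z"
    and A_par: "0 \<le> mbar" "0 \<le> d"
    and A_r: "\<And>z. z \<in> space S \<Longrightarrow> (\<integral>\<^sup>+ z'. ennreal \<bar>r z'\<bar> \<partial>(kpow P S n z)) \<le> ennreal (g z)"
    and A_c: "\<And>z. z \<in> space S \<Longrightarrow> (\<integral>\<^sup>+ z'. ennreal \<bar>c z'\<bar> \<partial>(kpow P S n z)) \<le> ennreal (g z)"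
    and A_drift: "\<And>z. z \<in> space S \<Longrightarrow> (\<integral>\<^sup>+ z'. ennreal (g z') \<partial>(P z)) \<le> ennreal (mbar * g z + d)"
    and mdpos: "0 < m'" "0 < d'"
    and mcond: "mbar + 2 * m' > 1" "\<beta> * (mbar + 2 * m') < 1" "d' \<ge> d / (mbar + 2 * m' - 1)"
begin

definition "\<rho> = mbar + 2 * m'"

lemma rho: "1 < \<rho>" "\<beta> * \<rho> < 1" "0 \<le> \<rho>" "mbar \<le> \<rho>" "d \<le> (\<rho> - 1) * d'"
proof -
  show "1 < \<rho>" "\<beta> * \<rho> < 1" using mcond by (auto simp: \<rho>_def)
  then show "0 \<le> \<rho>" by simp
  show "mbar \<le> \<rho>" using mdpos by (simp add: \<rho>_def)
  have "d / (\<rho> - 1) \<le> d'" using mcond by (simp add: \<rho>_def)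
  then show "d \<le> (\<rho> - 1) * d'" using \<open>1 < \<rho>\<close> by (simp add: divide_le_eq mult.commute)
qed

lemma kmeas: "kpow P S t \<in> S \<rightarrow>\<^sub>M subprob_algebra S"
  by (rule measurable_prob_algebraD[OF kpow_meas[OF kernel]])

lemma kmeas': "z \<in> space S \<Longrightarrow> kpow P S t \<in> kpow P S k z \<rightarrow>\<^sub>M subprob_algebra S"
  using kmeas kpow_space(1)[OF kernel, of z k] by (simp cong: measurable_cong_sets)

lemma Pmeas': "z \<in> space S \<Longrightarrow> P \<in> kpow P S k z \<rightarrow>\<^sub>M subprob_algebra S"
  using measurable_prob_algebraD[OF kernel] kpow_space(1)[OF kernel, of z k] by (simp cong: measurable_cong_sets)

lemma Pmeas'': "z \<in> space S \<Longrightarrow> kpow P S t \<in> P z \<rightarrow>\<^sub>M subprob_algebra S"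
  using kmeas kpow_space(1)[OF kernel, of z 1] kpow_one[OF kernel, of z] by (simp cong: measurable_cong_sets)

lemma drift_w:
  assumes z: "z \<in> space S"
  shows "(\<integral>\<^sup>+x. ennreal (g x + d') \<partial>P z) \<le> ennreal \<rho> * ennreal (g z + d')"
proof -
  interpret prob_space "P z" using kpow_space(2)[OF kernel z, of 1] kpow_one[OF kernel z] by simp
  have sP: "sets (P z) = sets S" using kpow_space(1)[OF kernel z, of 1] kpow_one[OF kernel z] by simp
  have "(\<integral>\<^sup>+x. ennreal (g x + d') \<partial>P z) = (\<integral>\<^sup>+x. ennreal (g x) \<partial>P z) + (\<integral>\<^sup>+x. ennreal d' \<partial>P z)"
  proof -
    have "(\<integral>\<^sup>+x. ennreal (g x + d') \<partial>P z) = (\<integral>\<^sup>+x. (ennreal (g x) + ennreal d') \<partial>P z)"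
      by (rule nn_integral_cong) (simp add: ennreal_plus g_nn less_imp_le mdpos)
    also have "\<dots> = (\<integral>\<^sup>+x. ennreal (g x) \<partial>P z) + (\<integral>\<^sup>+x. ennreal d' \<partial>P z)"
      by (rule nn_integral_add) (use g_meas sP in \<open>auto cong: measurable_cong_sets\<close>)
    finally show ?thesis .
  qed
  also have "\<dots> \<le> ennreal (mbar * g z + d) + ennreal d'"
    using A_drift[OF z] by (simp add: emeasure_space_1)
  also have "\<dots> = ennreal (mbar * g z + d + d')"
    using A_par g_nn mdpos by (simp add: ennreal_plus)
  also have "\<dots> \<le> ennreal (\<rho> * (g z + d'))"
  proof (rule ennreal_leI)
    have "mbar * g z \<le> \<rho> * g z" using rho g_nn by (simp add: mult_right_mono)
    then show "mbar * g z + d + d' \<le> \<rho> * (g z + d')" using rho(5) by (simp add: algebra_simps)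
  qed
  also have "\<dots> = ennreal \<rho> * ennreal (g z + d')" by (rule ennreal_mult) (use rho g_nn[of z] mdpos in auto)
  finally show ?thesis .
qed

lemma kpow_w:
  assumes z: "z \<in> space S"
  shows "(\<integral>\<^sup>+x. ennreal (g x + d') \<partial>kpow P S k z) \<le> ennreal (\<rho>^k) * ennreal (g z + d')"
proof (induction k)
  case 0
  then show ?case using z g_meas by (simp add: nn_integral_return)
next
  case (Suc k)
  have "(\<integral>\<^sup>+x. ennreal (g x + d') \<partial>kpow P S (Suc k) z)
      = (\<integral>\<^sup>+x. (\<integral>\<^sup>+y. ennreal (g y + d') \<partial>P x) \<partial>kpow P S k z)"
  proof -
    have m: "(\<lambda>x. ennreal (g x + d')) \<in> borel_measurable S" using g_meas by measurable
    show ?thesis using nn_integral_bind[OF m Pmeas'[OF z]] by simp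
  qed
  also have "\<dots> \<le> (\<integral>\<^sup>+x. ennreal \<rho> * ennreal (g x + d') \<partial>kpow P S k z)"
    by (rule nn_integral_mono) (use drift_w kpow_space(3)[OF kernel z] in auto)
  also have "\<dots> = ennreal \<rho> * (\<integral>\<^sup>+x. ennreal (g x + d') \<partial>kpow P S k z)"
    using g_meas kpow_space(1)[OF kernel z] by (subst nn_integral_cmult) (auto cong: measurable_cong_sets)
  also have "\<dots> \<le> ennreal \<rho> * (ennreal (\<rho>^k) * ennreal (g z + d'))"
    by (rule mult_left_mono[OF Suc]) simp
  also have "\<dots> = ennreal (\<rho>^Suc k) * ennreal (g z + d')"
    using rho by (simp add: ennreal_mult mult.assoc)
  finally show ?case .
qed

lemma tail:
  assumes z: "z \<in> space S" and h: "h \<in> borel_measurable S"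
    and hA: "\<And>x. x \<in> space S \<Longrightarrow> (\<integral>\<^sup>+ y. ennreal \<bar>h y\<bar> \<partial>(kpow P S n x)) \<le> ennreal (g x)"
  shows "(\<integral>\<^sup>+x. ennreal \<bar>h x\<bar> \<partial>kpow P S (k + n) z) \<le> ennreal (\<rho>^k) * ennreal (g z + d')"
proof -
  have "(\<integral>\<^sup>+x. ennreal \<bar>h x\<bar> \<partial>kpow P S (k + n) z) = (\<integral>\<^sup>+x. (\<integral>\<^sup>+y. ennreal \<bar>h y\<bar> \<partial>kpow P S n x) \<partial>kpow P S k z)"
  proof -
    have m: "(\<lambda>x. ennreal \<bar>h x\<bar>) \<in> borel_measurable S" using h by measurable
    show ?thesis using nn_integral_bind[OF m kmeas'[OF z], of k n] kpow_add[OF kernel z, of k n] by simp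
  qed
  also have "\<dots> \<le> (\<integral>\<^sup>+x. ennreal (g x + d') \<partial>kpow P S k z)"
  proof (rule nn_integral_mono)
    fix x assume "x \<in> space (kpow P S k z)"
    then have "x \<in> space S" using kpow_space(3)[OF kernel z] by simp
    then show "(\<integral>\<^sup>+y. ennreal \<bar>h y\<bar> \<partial>kpow P S n x) \<le> ennreal (g x + d')"
      using hA[of x] mdpos g_nn by (metis add_increasing2 ennreal_leI less_imp_le order_trans order_refl)
  qed
  also have "\<dots> \<le> ennreal (\<rho>^k) * ennreal (g z + d')" by (rule kpow_w[OF z])
  finally show ?thesis .
qed

end


context mk2 begin

definition "Kc = 1/m' + 2/(1 - \<beta> * \<rho>)"

lemma Kc_pos: "0 \<le> Kc"
  using rho mdpos by (simp add: Kc_def)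

lemma geo_enn: "(\<Sum>j. ennreal ((\<beta>*\<rho>)^j)) = ennreal (1/(1-\<beta>*\<rho>))"
proof -
  have q: "0 \<le> \<beta>*\<rho>" using beta rho by simp
  have "(\<lambda>j. (\<beta>*\<rho>)^j) sums (1/(1-\<beta>*\<rho>))" using geometric_sums[of "\<beta>*\<rho>"] q rho by simp
  then have "(\<lambda>j. ennreal ((\<beta>*\<rho>)^j)) sums ennreal (1/(1-\<beta>*\<rho>))"
    using q rho by (subst sums_ennreal) auto
  then show ?thesis by (rule sums_unique[symmetric])
qed

lemma Bf_le:
  assumes z: "z \<in> space S"
  shows "Bf P S \<beta> r c z \<le> ennreal \<bar>r z\<bar> + ennreal Kc * ell P S n m' d' g r c z"
proof -
  define a where "a t = (\<integral>\<^sup>+x. ennreal \<bar>c x\<bar> \<partial>kpow P S t z)" for t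
  define b where "b t = (\<integral>\<^sup>+x. ennreal \<bar>r x\<bar> \<partial>kpow P S t z)" for t
  define f where "f t = ennreal (\<beta>^t) * (a t + b t)" for t
  define L where "L = ell P S n m' d' g r c z"
  define w where "w = g z + d'"
  have w0: "0 \<le> w" using g_nn mdpos by (simp add: w_def)
  have Bf: "Bf P S \<beta> r c z = (\<Sum>j. f (j + n)) + (\<Sum>j<n. f j)"
    unfolding Bf_def f_def a_def b_def by (rule suminf_offset) simp
  have L_def': "L = ennreal m' * ((\<Sum>t\<in>{1..<n}. b t) + (\<Sum>t<n. a t)) + ennreal (g z) + ennreal d'"
    by (simp add: L_def ell_def a_def b_def)
  have wL: "ennreal w \<le> L"
    unfolding L_def' w_def using g_nn mdpos by (simp add: ennreal_plus less_imp_le add.assoc)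
  have tail: "(\<Sum>j. f (j + n)) \<le> ennreal (2/(1-\<beta>*\<rho>)) * L"
  proof -
    have "(\<Sum>j. f (j + n)) \<le> (\<Sum>j. ennreal ((\<beta>*\<rho>)^j) * ennreal (2*w))"
    proof (rule suminf_le)
      fix j
      have ab: "a (j + n) + b (j + n) \<le> ennreal (\<rho>^j) * ennreal w + ennreal (\<rho>^j) * ennreal w"
        unfolding a_def b_def w_def
        by (intro add_mono tail[OF z c_meas A_c] tail[OF z r_meas A_r])
      have "f (j + n) \<le> ennreal (\<beta>^j) * (ennreal (\<rho>^j) * ennreal w + ennreal (\<rho>^j) * ennreal w)"
        unfolding f_def
      proof (rule mult_mono[OF _ ab])
        show "ennreal (\<beta>^(j+n)) \<le> ennreal (\<beta>^j)"
          using beta by (intro ennreal_leI) (simp add: power_add power_le_one mult_left_le)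
      qed auto
      also have "\<dots> = ennreal ((\<beta>*\<rho>)^j) * ennreal (2*w)"
        using beta rho w0
        by (simp add: ennreal_mult[symmetric] ennreal_plus[symmetric] power_mult_distrib algebra_simps
                 del: ennreal_plus)
      finally show "f (j + n) \<le> ennreal ((\<beta>*\<rho>)^j) * ennreal (2*w)" .
    qed auto
    also have "\<dots> = ennreal (1/(1-\<beta>*\<rho>)) * ennreal (2*w)"
      using geo_enn by simp
    also have "\<dots> = ennreal (2/(1-\<beta>*\<rho>)) * ennreal w"
      using rho w0 beta by (simp add: ennreal_mult[symmetric])
    also have "\<dots> \<le> ennreal (2/(1-\<beta>*\<rho>)) * L"
      by (rule mult_left_mono[OF wL]) simp
    finally show ?thesis .
  qed
  have head: "(\<Sum>j<n. f j) \<le> ennreal \<bar>r z\<bar> + ennreal (1/m') * L"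
  proof -
    have "(\<Sum>j<n. f j) \<le> (\<Sum>j<n. a j + b j)"
    proof (rule sum_mono)
      fix j
      have "f j \<le> 1 * (a j + b j)" unfolding f_def
        using beta by (intro mult_right_mono) (auto simp: power_le_one)
      then show "f j \<le> a j + b j" by simp
    qed
    also have "\<dots> = (\<Sum>j<n. a j) + (\<Sum>j<n. b j)" by (simp add: sum.distrib)
    also have "(\<Sum>j<n. b j) \<le> b 0 + (\<Sum>j\<in>{1..<n}. b j)"
    proof (cases n)
      case 0 then show ?thesis by simp
    next
      case (Suc k)
      then have "{..<n} = insert 0 {1..<n}" by auto
      then show ?thesis by simp
    qed
    finally have "(\<Sum>j<n. f j) \<le> b 0 + ((\<Sum>j\<in>{1..<n}. b j) + (\<Sum>j<n. a j))"
      by (simp add: add_mono ac_simps)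
    also have "b 0 = ennreal \<bar>r z\<bar>" using z r_meas by (simp add: b_def nn_integral_return)
    also have "(\<Sum>j\<in>{1..<n}. b j) + (\<Sum>j<n. a j) \<le> ennreal (1/m') * L"
    proof -
      have "ennreal m' * ((\<Sum>j\<in>{1..<n}. b j) + (\<Sum>j<n. a j)) \<le> L" unfolding L_def'
        by (simp add: add.assoc)
      then have "ennreal (1/m') * (ennreal m' * ((\<Sum>j\<in>{1..<n}. b j) + (\<Sum>j<n. a j))) \<le> ennreal (1/m') * L"
        by (rule mult_left_mono) simp
      moreover have "ennreal (1/m') * ennreal m' = 1"
        using mdpos by (simp add: ennreal_mult[symmetric])
      ultimately show ?thesis by (simp add: mult.assoc[symmetric])
    qed
    finally show ?thesis by simp
  qed
  have "Bf P S \<beta> r c z \<le> ennreal (2/(1-\<beta>*\<rho>)) * L + (ennreal \<bar>r z\<bar> + ennreal (1/m') * L)"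
    unfolding Bf by (rule add_mono[OF tail head])
  also have "\<dots> = ennreal \<bar>r z\<bar> + ennreal Kc * L"
  proof -
    have "ennreal Kc = ennreal (1/m') + ennreal (2/(1-\<beta>*\<rho>))"
      unfolding Kc_def by (rule ennreal_plus) (use rho mdpos in auto)
    then show ?thesis by (simp add: distrib_right algebra_simps)
  qed
  finally show ?thesis unfolding L_def .
qed

end


context mk2 begin

lemma Bf_meas: "Bf P S \<beta> r c \<in> borel_measurable S"
  unfolding Bf_def using kmeas r_meas c_meas by measurable

lemma vstar_abs:
  assumes x: "x \<in> space S" and fin: "ell P S n m' d' g r c x < \<infinity>"
  shows "Bf P S \<beta> r c x < \<infinity>"
    "\<bar>vstar M F Z \<beta> r c x\<bar> \<le> \<bar>r x\<bar> + Kc * enn2real (ell P S n m' d' g r c x)"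
    "\<bar>vstar M F Z \<beta> r c x\<bar> \<le> enn2real (Bf P S \<beta> r c x)"
proof -
  let ?L = "ell P S n m' d' g r c x"
  have eq: "ennreal \<bar>r x\<bar> + ennreal Kc * ?L = ennreal (\<bar>r x\<bar> + Kc * enn2real ?L)"
    using fin Kc_pos by (cases ?L) (auto simp: ennreal_plus ennreal_mult)
  have le: "Bf P S \<beta> r c x \<le> ennreal (\<bar>r x\<bar> + Kc * enn2real ?L)"
    using Bf_le[OF x] eq by simp
  then show fin2: "Bf P S \<beta> r c x < \<infinity>" by (simp add: le_less_trans)
  have B2: "enn2real (Bf P S \<beta> r c x) \<le> \<bar>r x\<bar> + Kc * enn2real ?L"
    using le Kc_pos by (simp add: enn2real_leI)
  note vb = vstar_bounds[OF x _ r_meas c_meas fin2] 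
  have "\<bar>r x\<bar> \<le> enn2real (Bf P S \<beta> r c x)"
  proof -
    have "ennreal \<bar>r x\<bar> \<le> ennreal (\<beta>^0) * ((\<integral>\<^sup>+y. ennreal \<bar>c y\<bar> \<partial>kpow P S 0 x) + (\<integral>\<^sup>+y. ennreal \<bar>r y\<bar> \<partial>kpow P S 0 x))"
      using x r_meas c_meas by (simp add: nn_integral_return)
    also have "\<dots> \<le> Bf P S \<beta> r c x" unfolding Bf_def
      using sum_le_suminf[OF summableI, of "{0}" "\<lambda>t. ennreal (\<beta>^t) * ((\<integral>\<^sup>+y. ennreal \<bar>c y\<bar> \<partial>kpow P S t x) + (\<integral>\<^sup>+y. ennreal \<bar>r y\<bar> \<partial>kpow P S t x))"]
      by simp
    finally have "ennreal \<bar>r x\<bar> \<le> Bf P S \<beta> r c x" .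
    from enn2real_mono[OF this] fin2 show ?thesis by simp
  qed
  then show "\<bar>vstar M F Z \<beta> r c x\<bar> \<le> enn2real (Bf P S \<beta> r c x)"
    using vb beta by force
  then show "\<bar>vstar M F Z \<beta> r c x\<bar> \<le> \<bar>r x\<bar> + Kc * enn2real ?L"
    using B2 by linarith
qed

lemma int_Bf:
  assumes z: "z \<in> space S"
  shows "ennreal \<beta> * (\<integral>\<^sup>+x. Bf P S \<beta> r c x \<partial>P z) \<le> Bf P S \<beta> r c z"
proof -
  define f where "f t = ennreal (\<beta>^t) * ((\<integral>\<^sup>+x. ennreal \<bar>c x\<bar> \<partial>kpow P S t z) + (\<integral>\<^sup>+x. ennreal \<bar>r x\<bar> \<partial>kpow P S t z))" for t
  have sP: "sets (P z) = sets S" using kpow_space(1)[OF kernel z, of 1] kpow_one[OF kernel z] by simp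
  have "(\<integral>\<^sup>+x. Bf P S \<beta> r c x \<partial>P z) = (\<Sum>t. \<integral>\<^sup>+x. ennreal (\<beta>^t) * ((\<integral>\<^sup>+y. ennreal \<bar>c y\<bar> \<partial>kpow P S t x) + (\<integral>\<^sup>+y. ennreal \<bar>r y\<bar> \<partial>kpow P S t x)) \<partial>P z)"
    unfolding Bf_def
    by (rule nn_integral_suminf) (use kmeas r_meas c_meas sP in \<open>measurable\<close>)
  also have "\<dots> = (\<Sum>t. ennreal (\<beta>^t) * ((\<integral>\<^sup>+x. ennreal \<bar>c x\<bar> \<partial>kpow P S (Suc t) z) + (\<integral>\<^sup>+x. ennreal \<bar>r x\<bar> \<partial>kpow P S (Suc t) z)))"
  proof (rule suminf_cong)
    fix t
    have mc: "(\<lambda>x. ennreal \<bar>c x\<bar>) \<in> borel_measurable S" "(\<lambda>x. ennreal \<bar>r x\<bar>) \<in> borel_measurable S"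
      using r_meas c_meas by measurable
    have i1: "(\<integral>\<^sup>+x. ennreal \<bar>c x\<bar> \<partial>kpow P S (Suc t) z) = (\<integral>\<^sup>+x. (\<integral>\<^sup>+y. ennreal \<bar>c y\<bar> \<partial>kpow P S t x) \<partial>P z)"
      using nn_integral_bind[OF mc(1) Pmeas''[OF z, of t]] kpow_Suc'[OF kernel z, of t] by simp
    have i2: "(\<integral>\<^sup>+x. ennreal \<bar>r x\<bar> \<partial>kpow P S (Suc t) z) = (\<integral>\<^sup>+x. (\<integral>\<^sup>+y. ennreal \<bar>r y\<bar> \<partial>kpow P S t x) \<partial>P z)"
      using nn_integral_bind[OF mc(2) Pmeas''[OF z, of t]] kpow_Suc'[OF kernel z, of t] by simp
    have m1: "(\<lambda>x. \<integral>\<^sup>+y. ennreal \<bar>c y\<bar> \<partial>kpow P S t x) \<in> borel_measurable (P z)"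
      "(\<lambda>x. \<integral>\<^sup>+y. ennreal \<bar>r y\<bar> \<partial>kpow P S t x) \<in> borel_measurable (P z)"
      using kmeas r_meas c_meas sP by (measurable; simp cong: measurable_cong_sets)+
    show "(\<integral>\<^sup>+x. ennreal (\<beta>^t) * ((\<integral>\<^sup>+y. ennreal \<bar>c y\<bar> \<partial>kpow P S t x) + (\<integral>\<^sup>+y. ennreal \<bar>r y\<bar> \<partial>kpow P S t x)) \<partial>P z)
      = ennreal (\<beta>^t) * ((\<integral>\<^sup>+x. ennreal \<bar>c x\<bar> \<partial>kpow P S (Suc t) z) + (\<integral>\<^sup>+x. ennreal \<bar>r x\<bar> \<partial>kpow P S (Suc t) z))"
      unfolding i1 i2 using m1 by (simp add: nn_integral_cmult nn_integral_add)
  qed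
  finally have eq: "(\<integral>\<^sup>+x. Bf P S \<beta> r c x \<partial>P z) = (\<Sum>t. ennreal (\<beta>^t) * ((\<integral>\<^sup>+x. ennreal \<bar>c x\<bar> \<partial>kpow P S (Suc t) z) + (\<integral>\<^sup>+x. ennreal \<bar>r x\<bar> \<partial>kpow P S (Suc t) z)))" .
  have "ennreal \<beta> * (\<integral>\<^sup>+x. Bf P S \<beta> r c x \<partial>P z) = (\<Sum>t. f (t + 1))"
    unfolding eq f_def ennreal_suminf_cmult[symmetric]
    using beta by (intro suminf_cong) (simp add: ennreal_mult mult.assoc)
  also have "\<dots> \<le> (\<Sum>t. f (t + 1)) + (\<Sum>j<1. f j)" by simp
  also have "\<dots> = Bf P S \<beta> r c z"
    unfolding Bf_def f_def[symmetric] by (rule suminf_offset[symmetric]) simp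
  finally show ?thesis .
qed

end


lemma pratt:
  fixes h G :: "nat \<Rightarrow> 'a \<Rightarrow> real" and hl Gl :: "'a \<Rightarrow> real"
  assumes hm: "\<And>k. h k \<in> borel_measurable M" and hlm: "hl \<in> borel_measurable M"
    and Gi: "\<And>k. integrable M (G k)" and Gli: "integrable M Gl"
    and bound: "\<And>k x. x \<in> space M \<Longrightarrow> \<bar>h k x\<bar> \<le> G k x"
    and hconv: "\<And>x. x \<in> space M \<Longrightarrow> (\<lambda>k. h k x) \<longlonglongrightarrow> hl x"
    and Gconv: "\<And>x. x \<in> space M \<Longrightarrow> (\<lambda>k. G k x) \<longlonglongrightarrow> Gl x"
    and intconv: "(\<lambda>k. integral\<^sup>L M (G k)) \<longlonglongrightarrow> integral\<^sup>L M Gl"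
  shows "integrable M hl" "\<And>k. integrable M (h k)" "(\<lambda>k. integral\<^sup>L M (h k)) \<longlonglongrightarrow> integral\<^sup>L M hl"
proof -
  have Gm: "G k \<in> borel_measurable M" for k using Gi by simp
  have Glm: "Gl \<in> borel_measurable M" using Gli by simp
  have hlb: "\<bar>hl x\<bar> \<le> Gl x" if x: "x \<in> space M" for x
  proof -
    have "(\<lambda>k. \<bar>h k x\<bar>) \<longlonglongrightarrow> \<bar>hl x\<bar>" by (intro tendsto_rabs hconv x)
    then show ?thesis by (rule LIMSEQ_le[OF _ Gconv[OF x]]) (use bound x in auto)
  qed
  show hli: "integrable M hl"
    by (rule Bochner_Integration.integrable_bound[OF Gli hlm]) (use hlb in \<open>force intro!: AE_I2\<close>)
  show hi: "integrable M (h k)" for k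
    by (rule Bochner_Integration.integrable_bound[OF Gi[of k] hm[of k]], rule AE_I2) (metis bound abs_ge_self order_trans real_norm_def)
  define cl where "cl k x = max (- Gl x) (min (Gl x) (h k x))" for k x
  have clm: "cl k \<in> borel_measurable M" for k unfolding cl_def using hm Glm by measurable
  have cl1: "(\<lambda>k. integral\<^sup>L M (cl k)) \<longlonglongrightarrow> integral\<^sup>L M hl"
  proof (rule integral_dominated_convergence[OF hlm clm Gli])
    show "AE x in M. (\<lambda>k. cl k x) \<longlonglongrightarrow> hl x"
    proof (rule AE_I2)
      fix x assume x: "x \<in> space M"
      have "(\<lambda>k. cl k x) \<longlonglongrightarrow> max (- Gl x) (min (Gl x) (hl x))"
        unfolding cl_def by (intro tendsto_max tendsto_min tendsto_const hconv x)
      also have "max (- Gl x) (min (Gl x) (hl x)) = hl x" using hlb[OF x] by auto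
      finally show "(\<lambda>k. cl k x) \<longlonglongrightarrow> hl x" .
    qed
    show "AE x in M. norm (cl k x) \<le> Gl x" for k
    proof (rule AE_I2)
      fix x assume "x \<in> space M"
      then have "0 \<le> Gl x" using hlb by fastforce
      then show "norm (cl k x) \<le> Gl x" by (simp add: cl_def)
    qed
  qed
  have diff: "\<bar>h k x - cl k x\<bar> \<le> \<bar>G k x - Gl x\<bar>" if x: "x \<in> space M" for k x
    using bound[OF x, of k] hlb[OF x] unfolding cl_def by (auto simp: max_def min_def abs_if split: if_splits)
  have Gdi: "integrable M (\<lambda>x. \<bar>G k x - Gl x\<bar>)" for k using Gi Gli by auto
  have sch: "(\<lambda>k. \<integral>\<^sup>+ x. norm (G k x - Gl x) \<partial>M) \<longlonglongrightarrow> 0"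
  proof (rule Scheffe_lemma1[OF Gi Gli])
    show "AE x in M. (\<lambda>k. G k x) \<longlonglongrightarrow> Gl x" using Gconv by (auto intro!: AE_I2)
    have Gnn: "0 \<le> G k x" if "x \<in> space M" for k x using bound[OF that, of k] by simp
    have Glnn: "0 \<le> Gl x" if "x \<in> space M" for x using hlb[OF that] by simp
    have eq1: "(\<integral>\<^sup>+ x. norm (G k x) \<partial>M) = ennreal (integral\<^sup>L M (G k))" for k
    proof -
      have "(\<integral>\<^sup>+ x. norm (G k x) \<partial>M) = (\<integral>\<^sup>+ x. ennreal (G k x) \<partial>M)"
        by (rule nn_integral_cong) (use Gnn in auto)
      also have "\<dots> = ennreal (integral\<^sup>L M (G k))"
        by (rule nn_integral_eq_integral[OF Gi]) (use Gnn in \<open>auto intro!: AE_I2\<close>)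
      finally show ?thesis .
    qed
    have eq2: "(\<integral>\<^sup>+ x. norm (Gl x) \<partial>M) = ennreal (integral\<^sup>L M Gl)"
    proof -
      have "(\<integral>\<^sup>+ x. norm (Gl x) \<partial>M) = (\<integral>\<^sup>+ x. ennreal (Gl x) \<partial>M)"
        by (rule nn_integral_cong) (use Glnn in auto)
      also have "\<dots> = ennreal (integral\<^sup>L M Gl)"
        by (rule nn_integral_eq_integral[OF Gli]) (use Glnn in \<open>auto intro!: AE_I2\<close>)
      finally show ?thesis .
    qed
    have "(\<lambda>k. ennreal (integral\<^sup>L M (G k))) \<longlonglongrightarrow> ennreal (integral\<^sup>L M Gl)"
      by (rule tendsto_ennrealI[OF intconv])
    then have "limsup (\<lambda>k. ennreal (integral\<^sup>L M (G k))) = ennreal (integral\<^sup>L M Gl)"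
      by (simp add: lim_imp_Limsup)
    then show "limsup (\<lambda>k. \<integral>\<^sup>+ x. norm (G k x) \<partial>M) \<le> (\<integral>\<^sup>+ x. norm (Gl x) \<partial>M)"
    proof -
      have "(\<lambda>k. \<integral>\<^sup>+ x. norm (G k x) \<partial>M) = (\<lambda>k. ennreal (integral\<^sup>L M (G k)))"
        using eq1 by (intro ext) blast
      then show ?thesis using \<open>limsup (\<lambda>k. ennreal (integral\<^sup>L M (G k))) = ennreal (integral\<^sup>L M Gl)\<close> eq2
        by (metis order_refl)
    qed
  qed
  have sch2: "(\<lambda>k. integral\<^sup>L M (\<lambda>x. \<bar>G k x - Gl x\<bar>)) \<longlonglongrightarrow> 0"
  proof -
    have "integral\<^sup>L M (\<lambda>x. \<bar>G k x - Gl x\<bar>) = enn2real (\<integral>\<^sup>+ x. norm (G k x - Gl x) \<partial>M)" for k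
      by (subst integral_eq_nn_integral) (use Gi Gli in auto)
    moreover have "(\<lambda>k. enn2real (\<integral>\<^sup>+ x. norm (G k x - Gl x) \<partial>M)) \<longlonglongrightarrow> 0"
      by (rule tendsto_enn2real) (use sch in simp_all)
    ultimately show ?thesis by simp
  qed
  have d: "(\<lambda>k. integral\<^sup>L M (h k) - integral\<^sup>L M (cl k)) \<longlonglongrightarrow> 0"
  proof (rule Lim_null_comparison[OF _ sch2])
    show "\<forall>\<^sub>F k in sequentially. norm (integral\<^sup>L M (h k) - integral\<^sup>L M (cl k)) \<le> integral\<^sup>L M (\<lambda>x. \<bar>G k x - Gl x\<bar>)"
    proof (intro always_eventually allI)
      fix k
      have cli: "integrable M (cl k)"
        by (rule Bochner_Integration.integrable_bound[OF Gli clm]) (use hlb in \<open>auto simp: cl_def intro!: AE_I2\<close>)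
      have "norm (integral\<^sup>L M (h k) - integral\<^sup>L M (cl k)) = norm (integral\<^sup>L M (\<lambda>x. h k x - cl k x))"
        using hi cli by simp
      also have "\<dots> \<le> integral\<^sup>L M (\<lambda>x. norm (h k x - cl k x))"
        by (rule integral_norm_bound)
      also have "\<dots> \<le> integral\<^sup>L M (\<lambda>x. \<bar>G k x - Gl x\<bar>)"
        by (rule integral_mono) (use hi cli Gdi diff in auto)
      finally show "norm (integral\<^sup>L M (h k) - integral\<^sup>L M (cl k)) \<le> integral\<^sup>L M (\<lambda>x. \<bar>G k x - Gl x\<bar>)" .
    qed
  qed
  have "(\<lambda>k. (integral\<^sup>L M (h k) - integral\<^sup>L M (cl k)) + integral\<^sup>L M (cl k)) \<longlonglongrightarrow> 0 + integral\<^sup>L M hl"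
    by (rule tendsto_add[OF d cl1])
  then show "(\<lambda>k. integral\<^sup>L M (h k)) \<longlonglongrightarrow> integral\<^sup>L M hl" by simp
qed


lemma upd_nth[simp]: "upd z i t $ i = t" by (simp add: upd_def)
lemma upd_nth_other: "j \<noteq> i \<Longrightarrow> upd z i t $ j = z $ j" by (simp add: upd_def)
lemma upd_upd[simp]: "upd (upd z i t) i s = upd z i s" by (simp add: upd_def vec_eq_iff)
lemma upd_same[simp]: "upd z i (z $ i) = z" by (simp add: upd_def vec_eq_iff)

lemma upd_diff: "upd z i s - upd z i t = axis i (s - t)"
  by (simp add: upd_def axis_def vec_eq_iff)

lemma norm_axis_real: "norm (axis i (a::real)) = \<bar>a\<bar>"
proof -
  have "axis i a = a *\<^sub>R axis i (1::real)" by (simp add: axis_def vec_eq_iff)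
  then show ?thesis by simp
qed

lemma dist_upd: "dist (upd z i s) (upd z i t) = \<bar>s - t\<bar>"
  by (simp add: dist_norm upd_diff norm_axis_real)

lemma dist_upd0: "dist (upd z i s) z = \<bar>s - z $ i\<bar>"
  using dist_upd[of z i s "z $ i"] by simp

lemma continuous_upd: "continuous_on A (\<lambda>t. upd z i t)"
proof -
  have "(\<lambda>t. upd z i t) = (\<lambda>t. z + axis i (t - z $ i))"
    by (rule ext) (simp add: upd_def axis_def vec_eq_iff)
  moreover have "continuous_on A (\<lambda>t. z + axis i (t - z $ i))"
  proof -
    have "(\<lambda>t. axis i (t - z $ i)) = (\<lambda>t. (t - z $ i) *\<^sub>R axis i (1::real))"
      by (rule ext) (simp add: axis_def vec_eq_iff)
    moreover have "continuous_on A (\<lambda>t. (t - z $ i) *\<^sub>R axis i (1::real))"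
      by (intro continuous_intros)
    ultimately have "continuous_on A (\<lambda>t. axis i (t - z $ i))" by metis
    then show ?thesis by (intro continuous_on_add continuous_on_const)
  qed
  ultimately show ?thesis by simp
qed

lemma mono_bound:
  fixes D D' :: "real \<Rightarrow> real" and a b :: real
  assumes ab: "a \<le> b"
    and der: "\<And>s. s \<in> {a..b} \<Longrightarrow> (D has_real_derivative D' s) (at s)"
    and nz: "\<And>s. s \<in> {a<..<b} \<Longrightarrow> D' s \<noteq> 0"
    and s: "s \<in> {a..b}"
  shows "\<bar>D s\<bar> \<le> \<bar>D a\<bar> + \<bar>D b\<bar>"
proof -
  have cont: "continuous_on {a..b} D"
    using der by (meson DERIV_isCont continuous_at_imp_continuous_on)
  have up: "D s \<le> max (D a) (D b)"
  proof (rule ccontr)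
    assume "\<not> ?thesis"
    then have gt: "D s > D a" "D s > D b" by auto
    obtain c where c: "c \<in> {a..b}" "\<forall>y\<in>{a..b}. D y \<le> D c"
      using continuous_attains_sup[OF compact_Icc _ cont] ab by auto
    have "D c \<ge> D s" using c s by auto
    then have cne: "c \<noteq> a" "c \<noteq> b" using gt by auto
    then have ci: "c \<in> {a<..<b}" using c by auto
    have "D' c = 0"
    proof (rule DERIV_local_max[OF der[OF c(1)]])
      show "0 < min (c - a) (b - c)" using ci by auto
      show "\<forall>y. \<bar>c - y\<bar> < min (c - a) (b - c) \<longrightarrow> D y \<le> D c"
      proof (intro allI impI)
        fix y assume "\<bar>c - y\<bar> < min (c - a) (b - c)"
        then have "y \<in> {a..b}" by auto
        then show "D y \<le> D c" using c(2) by auto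
      qed
    qed
    with nz[OF ci] show False by simp
  qed
  have lo: "D s \<ge> min (D a) (D b)"
  proof (rule ccontr)
    assume "\<not> ?thesis"
    then have gt: "D s < D a" "D s < D b" by auto
    obtain c where c: "c \<in> {a..b}" "\<forall>y\<in>{a..b}. D c \<le> D y"
      using continuous_attains_inf[OF compact_Icc _ cont] ab by auto
    have "D c \<le> D s" using c s by auto
    then have cne: "c \<noteq> a" "c \<noteq> b" using gt by auto
    then have ci: "c \<in> {a<..<b}" using c by auto
    have "D' c = 0"
    proof (rule DERIV_local_min[OF der[OF c(1)]])
      show "0 < min (c - a) (b - c)" using ci by auto
      show "\<forall>y. \<bar>c - y\<bar> < min (c - a) (b - c) \<longrightarrow> D c \<le> D y"
      proof (intro allI impI)
        fix y assume "\<bar>c - y\<bar> < min (c - a) (b - c)"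
        then have "y \<in> {a..b}" by auto
        then show "D c \<le> D y" using c(2) by auto
      qed
    qed
    with nz[OF ci] show False by simp
  qed
  show ?thesis using up lo by linarith
qed

lemma quot_bound:
  fixes \<phi> \<phi>' :: "real \<Rightarrow> real" and a b t h B :: real
  assumes der: "\<And>s. s \<in> {a..b} \<Longrightarrow> (\<phi> has_real_derivative \<phi>' s) (at s)"
    and bnd: "\<And>s. s \<in> {a..b} \<Longrightarrow> \<bar>\<phi>' s\<bar> \<le> B"
    and t: "t \<in> {a..b}" and th: "t + h \<in> {a..b}" and h: "h \<noteq> 0"
  shows "\<bar>(\<phi> (t + h) - \<phi> t) / h\<bar> \<le> B"
proof -
  have gen: "\<bar>(\<phi> v - \<phi> u) / (v - u)\<bar> \<le> B" if uv: "u < v" "u \<in> {a..b}" "v \<in> {a..b}" for u v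
  proof -
    have cont: "continuous_on {u..v} \<phi>"
    proof (intro continuous_at_imp_continuous_on ballI)
      fix x assume "x \<in> {u..v}"
      then have "x \<in> {a..b}" using uv by auto
      then show "isCont \<phi> x" using der DERIV_isCont by blast
    qed
    obtain l w where lw: "u < w" "w < v" "DERIV \<phi> w :> l" "\<phi> v - \<phi> u = (v - u) * l"
    proof -
      have dif: "\<phi> differentiable (at x)" if "u < x" "x < v" for x
      proof -
        have "x \<in> {a..b}" using that uv by auto
        then show ?thesis using der real_differentiable_def by blast
      qed
      show ?thesis using MVT[OF uv(1) cont dif] that by blast
    qed
    have wab: "w \<in> {a..b}" using lw uv by auto
    have "l = \<phi>' w" using DERIV_unique[OF lw(3) der[OF wab]] .
    then show ?thesis using lw uv bnd[OF wab] by (simp add: abs_div)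
  qed
  show ?thesis
  proof (cases "h > 0")
    case True
    then show ?thesis using gen[of t "t+h"] t th by simp
  next
    case False
    then have "h < 0" using h by simp
    then have "\<bar>(\<phi> t - \<phi> (t+h)) / (t - (t+h))\<bar> \<le> B" using gen[of "t+h" t] t th by simp
    then show ?thesis by (simp add: abs_div abs_minus_commute)
  qed
qed


locale ana =
  fixes Zs :: "(real ^ 'm) set" and f :: "real ^ 'm \<Rightarrow> real ^ 'm \<Rightarrow> real"
    and V H :: "real ^ 'm \<Rightarrow> real" and i :: 'm
  assumes Zs: "Zs \<in> sets borel"
    and Vm: "(\<lambda>x. indicator Zs x * V x) \<in> borel_measurable lborel"
    and Vb: "\<And>x. x \<in> Zs \<Longrightarrow> \<bar>V x\<bar> \<le> H x"
    and Hc: "continuous_on Zs H"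
    and a2: "\<And>z z'. z \<in> interior Zs \<Longrightarrow> z' \<in> Zs \<Longrightarrow> Dp2_ex i (\<lambda>x. f z' x) z"
    and a_cont: "continuous_on (interior Zs \<times> Zs) (\<lambda>(z, z'). Dp i (\<lambda>x. f z' x) z)"
    and b_loc: "\<And>z0. z0 \<in> interior Zs \<Longrightarrow> \<exists>\<delta>>0. \<exists>A. compact A \<and> A \<subseteq> Zs \<and>
           (\<forall>z'\<in>Zs - A. \<forall>t. upd z0 i t \<in> interior Zs \<and> Dp i (Dp i (\<lambda>x. f z' x)) (upd z0 i t) = 0
               \<longrightarrow> \<bar>t - z0 $ i\<bar> \<ge> \<delta>)"
    and Hint: "\<And>z. z \<in> interior Zs \<Longrightarrow> set_integrable lborel Zs (\<lambda>z'. H z' * Dp i (\<lambda>x. f z' x) z)"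
    and Hcont: "continuous_on (interior Zs) (\<lambda>z. LINT z':Zs|lborel. \<bar>H z' * Dp i (\<lambda>x. f z' x) z\<bar>)"
    and Vfint: "\<And>z. z \<in> interior Zs \<Longrightarrow> set_integrable lborel Zs (\<lambda>z'. V z' * f z' z)"
begin

abbreviation "U \<equiv> interior Zs"

lemma H_nn: "x \<in> Zs \<Longrightarrow> 0 \<le> H x"
  using Vb[of x] by linarith

lemma Dex: assumes "z \<in> U" "z' \<in> Zs" shows "Dp_ex i (\<lambda>x. f z' x) z"
  using a2[OF assms] unfolding Dp2_ex_def using eventually_nhds_x_imp_x by fastforce

lemma F1: assumes "upd z0 i s \<in> U" "z' \<in> Zs"
  shows "((\<lambda>t. f z' (upd z0 i t)) has_real_derivative Dp i (\<lambda>x. f z' x) (upd z0 i s)) (at s)"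
proof -
  have "(\<lambda>t. f z' (upd (upd z0 i s) i t)) differentiable (at s)"
    using Dex[OF assms] unfolding Dp_ex_def by simp
  then show ?thesis unfolding Dp_def using DERIV_deriv_iff_real_differentiable by simp
qed

lemma F2: assumes "upd z0 i s \<in> U" "z' \<in> Zs"
  shows "((\<lambda>t. Dp i (\<lambda>x. f z' x) (upd z0 i t)) has_real_derivative Dp i (Dp i (\<lambda>x. f z' x)) (upd z0 i s)) (at s)"
proof -
  have "(\<lambda>t. Dp i (\<lambda>x. f z' x) (upd (upd z0 i s) i t)) differentiable (at s)"
    using a2[OF assms] unfolding Dp2_ex_def Dp_ex_def by simp
  then show ?thesis unfolding Dp_def[of i "Dp i (\<lambda>x. f z' x)"] using DERIV_deriv_iff_real_differentiable by simp
qed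

lemma Dcont: assumes "z \<in> U" shows "continuous_on Zs (\<lambda>z'. Dp i (\<lambda>x. f z' x) z)"
proof -
  have "continuous_on Zs (\<lambda>z'. (z, z'))" by (intro continuous_intros)
  from continuous_on_compose2[OF a_cont this] assms show ?thesis by auto
qed

lemma Dmeas: assumes "z \<in> U"
  shows "(\<lambda>z'. indicator Zs z' * Dp i (\<lambda>x. f z' x) z) \<in> borel_measurable lborel"
  using borel_measurable_continuous_on_indicator[OF Zs Dcont[OF assms]] by simp

lemma VDmeas: assumes "z \<in> U"
  shows "(\<lambda>z'. indicator Zs z' *\<^sub>R (V z' * Dp i (\<lambda>x. f z' x) z)) \<in> borel_measurable lborel"
proof -
  have "(\<lambda>z'. indicator Zs z' *\<^sub>R (V z' * Dp i (\<lambda>x. f z' x) z)) =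
        (\<lambda>z'. (indicator Zs z' * V z') * (indicator Zs z' * Dp i (\<lambda>x. f z' x) z))"
    by (auto simp: indicator_def fun_eq_iff)
  then show ?thesis using Vm Dmeas[OF assms] by simp
qed

lemma Dconv: assumes "z' \<in> Zs" "\<And>k. u k \<in> U" "a \<in> U" "u \<longlonglongrightarrow> a"
  shows "(\<lambda>k. Dp i (\<lambda>x. f z' x) (u k)) \<longlonglongrightarrow> Dp i (\<lambda>x. f z' x) a"
proof -
  have "(\<lambda>k. (u k, z')) \<longlonglongrightarrow> (a, z')" by (intro tendsto_Pair assms tendsto_const)
  moreover have "\<forall>n. (u n, z') \<in> U \<times> Zs" "(a, z') \<in> U \<times> Zs" using assms by auto
  ultimately have "((\<lambda>(z, z'). Dp i (\<lambda>x. f z' x) z) \<circ> (\<lambda>k. (u k, z'))) \<longlonglongrightarrow> (\<lambda>(z, z'). Dp i (\<lambda>x. f z' x) z) (a, z')"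
    using a_cont[unfolded continuous_on_sequentially, rule_format, of "(a, z')" "\<lambda>k. (u k, z')"] by blast
  then show ?thesis by (simp add: comp_def)
qed

theorem cont_deriv: "continuous_on U (\<lambda>z. LINT z':Zs|lborel. V z' * Dp i (\<lambda>x. f z' x) z)"
proof (rule continuous_on_sequentiallyI)
  fix u a assume u: "\<forall>n. u n \<in> U" and a: "a \<in> U" and ua: "u \<longlonglongrightarrow> a"
  define h where "h k z' = indicator Zs z' *\<^sub>R (V z' * Dp i (\<lambda>x. f z' x) (u k))" for k z'
  define hl where "hl z' = indicator Zs z' *\<^sub>R (V z' * Dp i (\<lambda>x. f z' x) a)" for z'
  define G where "G k z' = indicator Zs z' *\<^sub>R \<bar>H z' * Dp i (\<lambda>x. f z' x) (u k)\<bar>" for k z'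
  define Gl where "Gl z' = indicator Zs z' *\<^sub>R \<bar>H z' * Dp i (\<lambda>x. f z' x) a\<bar>" for z'
  have Gi: "integrable lborel (\<lambda>z'. indicator Zs z' *\<^sub>R \<bar>H z' * Dp i (\<lambda>x. f z' x) z\<bar>)" if "z \<in> U" for z
  proof -
    have "integrable lborel (\<lambda>z'. \<bar>indicator Zs z' *\<^sub>R (H z' * Dp i (\<lambda>x. f z' x) z)\<bar>)"
      using Hint[OF that] unfolding set_integrable_def by (rule integrable_abs)
    then show ?thesis by (simp add: indicator_def abs_mult)
  qed
  have P: "integrable lborel hl \<and> (\<lambda>k. integral\<^sup>L lborel (h k)) \<longlonglongrightarrow> integral\<^sup>L lborel hl"
  proof -
    have f1: "h k \<in> borel_measurable lborel" for k unfolding h_def using VDmeas u by blast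
    have f2: "hl \<in> borel_measurable lborel" unfolding hl_def using VDmeas a by blast
    have f3: "integrable lborel (G k)" for k unfolding G_def using Gi u by blast
    have f4: "integrable lborel Gl" unfolding Gl_def using Gi a by blast
    have f5: "\<bar>h k x\<bar> \<le> G k x" for k x
    proof (cases "x \<in> Zs")
      case True
      then have "\<bar>V x\<bar> * \<bar>Dp i (\<lambda>xa. f x xa) (u k)\<bar> \<le> H x * \<bar>Dp i (\<lambda>xa. f x xa) (u k)\<bar>"
        using Vb by (intro mult_right_mono) auto
      then show ?thesis using True H_nn[OF True] by (simp add: h_def G_def abs_mult)
    qed (simp add: h_def G_def)
    have f6: "(\<lambda>k. h k x) \<longlonglongrightarrow> hl x" for x
      unfolding h_def hl_def
    proof (cases "x \<in> Zs")
      case True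
      show "(\<lambda>k. indicator Zs x *\<^sub>R (V x * Dp i (\<lambda>xa. f x xa) (u k))) \<longlonglongrightarrow> indicator Zs x *\<^sub>R (V x * Dp i (\<lambda>xa. f x xa) a)"
        by (rule tendsto_scaleR[OF tendsto_const tendsto_mult[OF tendsto_const Dconv[OF True _ a ua]]]) (use u in blast)
    qed simp
    have f7: "(\<lambda>k. G k x) \<longlonglongrightarrow> Gl x" for x
      unfolding G_def Gl_def
    proof (cases "x \<in> Zs")
      case True
      show "(\<lambda>k. indicator Zs x *\<^sub>R \<bar>H x * Dp i (\<lambda>xa. f x xa) (u k)\<bar>) \<longlonglongrightarrow> indicator Zs x *\<^sub>R \<bar>H x * Dp i (\<lambda>xa. f x xa) a\<bar>"
        by (rule tendsto_scaleR[OF tendsto_const tendsto_rabs[OF tendsto_mult[OF tendsto_const Dconv[OF True _ a ua]]]]) (use u in blast)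
    qed simp
    have "(\<lambda>k. (\<lambda>z. LINT z':Zs|lborel. \<bar>H z' * Dp i (\<lambda>x. f z' x) z\<bar>) (u k)) \<longlonglongrightarrow> (LINT z':Zs|lborel. \<bar>H z' * Dp i (\<lambda>x. f z' x) a\<bar>)"
      using Hcont[unfolded continuous_on_sequentially] u a ua by (auto simp: comp_def)
    then have f8: "(\<lambda>k. integral\<^sup>L lborel (G k)) \<longlonglongrightarrow> integral\<^sup>L lborel Gl"
      unfolding G_def Gl_def set_lebesgue_integral_def by simp
    show ?thesis using pratt(1,3)[of h lborel hl G Gl, OF f1 f2 f3 f4 f5 f6 f7 f8] by blast
  qed
  then show "(\<lambda>n. LINT z':Zs|lborel. V z' * Dp i (\<lambda>x. f z' x) (u n)) \<longlonglongrightarrow> (LINT z':Zs|lborel. V z' * Dp i (\<lambda>x. f z' x) a)"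
    unfolding set_lebesgue_integral_def h_def hl_def by simp
qed

end


context ana begin

lemma loc_setup:
  assumes z0: "z0 \<in> U"
  obtains \<delta> A K where "\<delta> > 0" "compact A" "A \<subseteq> Zs" "0 \<le> K"
    "\<And>s. s \<in> {z0$i - \<delta> .. z0$i + \<delta>} \<Longrightarrow> upd z0 i s \<in> U"
    "\<And>z' s. z' \<in> Zs \<Longrightarrow> s \<in> {z0$i - \<delta> .. z0$i + \<delta>} \<Longrightarrow>
        \<bar>Dp i (\<lambda>x. f z' x) (upd z0 i s)\<bar> \<le> \<bar>Dp i (\<lambda>x. f z' x) (upd z0 i (z0$i - \<delta>))\<bar>
          + \<bar>Dp i (\<lambda>x. f z' x) (upd z0 i (z0$i + \<delta>))\<bar> + K * indicator A z'"
proof -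
  obtain e where e: "e > 0" "ball z0 e \<subseteq> U" using z0 open_interior open_contains_ball by blast
  obtain db A where dbA: "db > 0" "compact A" "A \<subseteq> Zs"
    "\<forall>z'\<in>Zs - A. \<forall>t. upd z0 i t \<in> U \<and> Dp i (Dp i (\<lambda>x. f z' x)) (upd z0 i t) = 0 \<longrightarrow> \<bar>t - z0 $ i\<bar> \<ge> db"
    using b_loc[OF z0] by blast
  define \<delta> where "\<delta> = min (e/2) (db/2)"
  have dpos: "\<delta> > 0" using e dbA by (simp add: \<delta>_def)
  let ?I = "{z0$i - \<delta> .. z0$i + \<delta>}"
  have inU: "upd z0 i s \<in> U" if "s \<in> ?I" for s
  proof -
    have "\<delta> \<le> e/2" by (simp add: \<delta>_def)
    moreover have "\<bar>s - z0$i\<bar> \<le> \<delta>" using that by (simp add: abs_le_iff)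
    ultimately have "dist (upd z0 i s) z0 < e" using e by (simp add: dist_upd0)
    then show ?thesis using e by (auto simp: dist_commute)
  qed
  let ?C = "(\<lambda>s. upd z0 i s) ` ?I \<times> A"
  have Cc: "compact ?C"
    by (intro compact_Times compact_continuous_image continuous_upd compact_Icc dbA)
  have CU: "?C \<subseteq> U \<times> Zs" using inU dbA by auto
  have "compact ((\<lambda>(z, z'). Dp i (\<lambda>x. f z' x) z) ` ?C)"
    by (rule compact_continuous_image[OF continuous_on_subset[OF a_cont CU] Cc])
  then obtain K0 where K0: "\<forall>y \<in> (\<lambda>(z, z'). Dp i (\<lambda>x. f z' x) z) ` ?C. norm y \<le> K0"
    using compact_imp_bounded bounded_iff by metis
  define K where "K = max K0 0"
  show ?thesis
  proof (rule that[OF dpos dbA(2,3) _ inU])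
    show "0 \<le> K" by (simp add: K_def)
    fix z' s assume z': "z' \<in> Zs" and s: "s \<in> ?I"
    show "\<bar>Dp i (\<lambda>x. f z' x) (upd z0 i s)\<bar> \<le> \<bar>Dp i (\<lambda>x. f z' x) (upd z0 i (z0$i - \<delta>))\<bar>
          + \<bar>Dp i (\<lambda>x. f z' x) (upd z0 i (z0$i + \<delta>))\<bar> + K * indicator A z'"
    proof (cases "z' \<in> A")
      case True
      have "\<bar>Dp i (\<lambda>x. f z' x) (upd z0 i s)\<bar> \<le> K0" using K0 True s by force
      then show ?thesis using True by (simp add: K_def)
    next
      case False
      have "\<bar>Dp i (\<lambda>x. f z' x) (upd z0 i s)\<bar> \<le> \<bar>Dp i (\<lambda>x. f z' x) (upd z0 i (z0$i - \<delta>))\<bar>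
          + \<bar>Dp i (\<lambda>x. f z' x) (upd z0 i (z0$i + \<delta>))\<bar>"
      proof (rule mono_bound[where D="\<lambda>t. Dp i (\<lambda>x. f z' x) (upd z0 i t)"
            and D'="\<lambda>t. Dp i (Dp i (\<lambda>x. f z' x)) (upd z0 i t)"])
        show "z0$i - \<delta> \<le> z0$i + \<delta>" using dpos by simp
        show "s \<in> ?I" by fact
        fix t assume t: "t \<in> ?I"
        show "((\<lambda>t. Dp i (\<lambda>x. f z' x) (upd z0 i t)) has_real_derivative Dp i (Dp i (\<lambda>x. f z' x)) (upd z0 i t)) (at t)"
          by (rule F2[OF inU[OF t] z'])
      next
        fix t assume t: "t \<in> {z0$i - \<delta> <..< z0$i + \<delta>}"
        then have tI: "t \<in> ?I" by auto
        show "Dp i (Dp i (\<lambda>x. f z' x)) (upd z0 i t) \<noteq> 0"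
        proof
          assume "Dp i (Dp i (\<lambda>x. f z' x)) (upd z0 i t) = 0"
          then have "\<bar>t - z0 $ i\<bar> \<ge> db" using dbA(4) z' False inU[OF tI] by blast
          moreover have "\<bar>t - z0 $ i\<bar> < db" using t dpos dbA by (auto simp: \<delta>_def abs_less_iff)
          ultimately show False by simp
        qed
      qed
      then show ?thesis using False by simp
    qed
  qed
qed

theorem deriv_int:
  assumes z0: "z0 \<in> U"
  shows "((\<lambda>t. LINT z':Zs|lborel. V z' * f z' (upd z0 i t)) has_real_derivative
            (LINT z':Zs|lborel. V z' * Dp i (\<lambda>x. f z' x) z0)) (at (z0 $ i))"
proof -
  obtain \<delta> A K where dpos: "\<delta> > 0" and A: "compact A" "A \<subseteq> Zs" and K: "0 \<le> K"
    and inU: "\<And>s. s \<in> {z0$i - \<delta> .. z0$i + \<delta>} \<Longrightarrow> upd z0 i s \<in> U"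
    and bnd: "\<And>z' s. z' \<in> Zs \<Longrightarrow> s \<in> {z0$i - \<delta> .. z0$i + \<delta>} \<Longrightarrow>
        \<bar>Dp i (\<lambda>x. f z' x) (upd z0 i s)\<bar> \<le> \<bar>Dp i (\<lambda>x. f z' x) (upd z0 i (z0$i - \<delta>))\<bar>
          + \<bar>Dp i (\<lambda>x. f z' x) (upd z0 i (z0$i + \<delta>))\<bar> + K * indicator A z'"
    using loc_setup[OF z0] by blast
  define t0 where "t0 = z0 $ i"
  define a where "a = t0 - \<delta>"
  define b where "b = t0 + \<delta>"
  have I: "{z0$i - \<delta> .. z0$i + \<delta>} = {a..b}" by (simp add: a_def b_def t0_def)
  have t0I: "t0 \<in> {a..b}" using dpos by (simp add: a_def b_def)
  have aU: "upd z0 i a \<in> U" and bU: "upd z0 i b \<in> U" using inU dpos by (auto simp: a_def b_def t0_def)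
  define \<Phi> where "\<Phi> t = (LINT z':Zs|lborel. V z' * f z' (upd z0 i t))" for t
  define L where "L = (LINT z':Zs|lborel. V z' * Dp i (\<lambda>x. f z' x) z0)"
  define w where "w z' = indicator Zs z' * (\<bar>H z' * Dp i (\<lambda>x. f z' x) (upd z0 i a)\<bar>
       + \<bar>H z' * Dp i (\<lambda>x. f z' x) (upd z0 i b)\<bar>) + K * (indicator A z' * H z')" for z'
  have wi: "integrable lborel w"
  proof -
    have i1: "integrable lborel (\<lambda>z'. \<bar>indicator Zs z' *\<^sub>R (H z' * Dp i (\<lambda>x. f z' x) (upd z0 i a))\<bar>)"
      using Hint[OF aU] unfolding set_integrable_def by (rule integrable_abs)
    have i2: "integrable lborel (\<lambda>z'. \<bar>indicator Zs z' *\<^sub>R (H z' * Dp i (\<lambda>x. f z' x) (upd z0 i b))\<bar>)"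
      using Hint[OF bU] unfolding set_integrable_def by (rule integrable_abs)
    have i3: "integrable lborel (\<lambda>z'. indicator A z' *\<^sub>R H z')"
      by (rule borel_integrable_compact[OF A(1) continuous_on_subset[OF Hc A(2)]])
    have "integrable lborel (\<lambda>z'. (\<bar>indicator Zs z' *\<^sub>R (H z' * Dp i (\<lambda>x. f z' x) (upd z0 i a))\<bar>
        + \<bar>indicator Zs z' *\<^sub>R (H z' * Dp i (\<lambda>x. f z' x) (upd z0 i b))\<bar>) + K * (indicator A z' *\<^sub>R H z'))"
      using i1 i2 i3 by auto
    moreover have "(\<lambda>z'. (\<bar>indicator Zs z' *\<^sub>R (H z' * Dp i (\<lambda>x. f z' x) (upd z0 i a))\<bar>
        + \<bar>indicator Zs z' *\<^sub>R (H z' * Dp i (\<lambda>x. f z' x) (upd z0 i b))\<bar>) + K * (indicator A z' *\<^sub>R H z')) = w"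
      by (rule ext) (simp add: w_def indicator_def abs_mult)
    ultimately show ?thesis by simp
  qed
  define p where "p s z' = indicator Zs z' *\<^sub>R (V z' * f z' (upd z0 i s))" for s z'
  have pint: "s \<in> {a..b} \<Longrightarrow> integrable lborel (p s)" for s
    using Vfint inU I unfolding p_def set_integrable_def by auto
  have lim: "(\<lambda>k. (\<Phi> (Y k) - \<Phi> t0) / (Y k - t0)) \<longlonglongrightarrow> L"
    if Y: "\<And>k. Y k \<in> {a..b}" "\<And>k. Y k \<noteq> t0" "Y \<longlonglongrightarrow> t0" for Y
  proof -
    define q where "q k z' = indicator Zs z' *\<^sub>R (V z' * ((f z' (upd z0 i (Y k)) - f z' (upd z0 i t0)) / (Y k - t0)))" for k z'
    define ql where "ql z' = indicator Zs z' *\<^sub>R (V z' * Dp i (\<lambda>x. f z' x) z0)" for z'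
    have qeq: "q k = (\<lambda>z'. (p (Y k) z' - p t0 z') / (Y k - t0))" for k
      by (rule ext) (simp add: q_def p_def indicator_def diff_divide_distrib right_diff_distrib)
    have qm: "q k \<in> borel_measurable lborel" for k
      unfolding qeq using pint[OF Y(1)] pint[OF t0I] by measurable
    have qlm: "ql \<in> borel_measurable lborel" unfolding ql_def using VDmeas[OF z0] .
    have int_q: "integral\<^sup>L lborel (q k) = (\<Phi> (Y k) - \<Phi> t0) / (Y k - t0)" for k
      unfolding qeq \<Phi>_def set_lebesgue_integral_def p_def[symmetric]
      using pint[OF Y(1)] pint[OF t0I] by simp
    have "(\<lambda>k. integral\<^sup>L lborel (q k)) \<longlonglongrightarrow> integral\<^sup>L lborel ql"
    proof (rule integral_dominated_convergence[OF qlm qm wi])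
      show "AE x in lborel. (\<lambda>k. q k x) \<longlonglongrightarrow> ql x"
      proof (rule AE_I2)
        fix x
        show "(\<lambda>k. q k x) \<longlonglongrightarrow> ql x"
        proof (cases "x \<in> Zs")
          case True
          have d: "((\<lambda>t. f x (upd z0 i t)) has_real_derivative Dp i (\<lambda>y. f x y) (upd z0 i t0)) (at t0)"
            by (rule F1[OF inU True]) (use t0I I in auto)
          then have "((\<lambda>t. (f x (upd z0 i t) - f x (upd z0 i t0)) / (t - t0)) \<longlongrightarrow> Dp i (\<lambda>y. f x y) z0) (at t0)"
            unfolding has_field_derivative_iff by (simp add: t0_def)
          then have "((\<lambda>t. (f x (upd z0 i t) - f x (upd z0 i t0)) / (t - t0)) \<circ> Y) \<longlonglongrightarrow> Dp i (\<lambda>y. f x y) z0"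
            using Y(2,3) unfolding tendsto_at_iff_sequentially by auto
          then have "(\<lambda>k. V x * ((f x (upd z0 i (Y k)) - f x (upd z0 i t0)) / (Y k - t0))) \<longlonglongrightarrow> V x * Dp i (\<lambda>y. f x y) z0"
            by (intro tendsto_mult tendsto_const) (simp add: comp_def)
          then show ?thesis using True by (simp add: q_def ql_def)
        qed (simp add: q_def ql_def)
      qed
      show "AE x in lborel. norm (q k x) \<le> w x" for k
      proof (rule AE_I2)
        fix x
        show "norm (q k x) \<le> w x"
        proof (cases "x \<in> Zs")
          case True
          define B where "B = \<bar>Dp i (\<lambda>y. f x y) (upd z0 i a)\<bar> + \<bar>Dp i (\<lambda>y. f x y) (upd z0 i b)\<bar> + K * indicator A x"
          have qb: "\<bar>(f x (upd z0 i (t0 + (Y k - t0))) - f x (upd z0 i t0)) / (Y k - t0)\<bar> \<le> B"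
          proof (rule quot_bound[where \<phi>="\<lambda>t. f x (upd z0 i t)" and \<phi>'="\<lambda>t. Dp i (\<lambda>y. f x y) (upd z0 i t)" and a=a and b=b])
            fix s assume s: "s \<in> {a..b}"
            then have "s \<in> {z0$i - \<delta> .. z0$i + \<delta>}" using I by simp
            then show "((\<lambda>t. f x (upd z0 i t)) has_real_derivative Dp i (\<lambda>y. f x y) (upd z0 i s)) (at s)"
              using F1[OF inU True] by blast
          next
            fix s assume s: "s \<in> {a..b}"
            then have "s \<in> {z0$i - \<delta> .. z0$i + \<delta>}" using I by simp
            from bnd[OF True this] show "\<bar>Dp i (\<lambda>y. f x y) (upd z0 i s)\<bar> \<le> B"
              unfolding B_def a_def b_def t0_def .
          next
            show "t0 \<in> {a..b}" by (rule t0I)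
            show "t0 + (Y k - t0) \<in> {a..b}" using Y(1)[of k] by simp
            show "Y k - t0 \<noteq> 0" using Y(2)[of k] by simp
          qed
          have B0: "0 \<le> B" unfolding B_def using K by simp
          have HB: "H x * B = \<bar>H x * Dp i (\<lambda>y. f x y) (upd z0 i a)\<bar> + \<bar>H x * Dp i (\<lambda>y. f x y) (upd z0 i b)\<bar> + K * (indicator A x * H x)"
          proof -
            have "H x * B = H x * \<bar>Dp i (\<lambda>y. f x y) (upd z0 i a)\<bar> + H x * \<bar>Dp i (\<lambda>y. f x y) (upd z0 i b)\<bar> + K * (indicator A x * H x)"
              unfolding B_def by (simp add: algebra_simps)
            then show ?thesis using H_nn[OF True] by (simp only: abs_mult abs_of_nonneg)
          qed
          have "\<bar>V x\<bar> * \<bar>(f x (upd z0 i (Y k)) - f x (upd z0 i t0)) / (Y k - t0)\<bar> \<le> H x * B"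
            using qb Vb[OF True] B0 by (intro mult_mono) simp_all
          moreover have "norm (q k x) = \<bar>V x\<bar> * \<bar>(f x (upd z0 i (Y k)) - f x (upd z0 i t0)) / (Y k - t0)\<bar>"
            using True by (simp only: q_def indicator_simps scaleR_one real_norm_def abs_mult)
          moreover have "w x = H x * B" using True unfolding HB w_def by simp
          ultimately show ?thesis by simp
        next
          case False
          have "0 \<le> K * (indicator A x * H x)"
            using K A(2) False by (auto simp: indicator_def)
          then show ?thesis using False by (simp add: q_def w_def)
        qed
      qed
    qed
    moreover have "integral\<^sup>L lborel ql = L" unfolding ql_def L_def set_lebesgue_integral_def ..
    ultimately show ?thesis using int_q by simp
  qed
  have "((\<lambda>t. (\<Phi> t - \<Phi> t0) / (t - t0)) \<longlongrightarrow> L) (at t0)"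
    unfolding tendsto_at_iff_sequentially
  proof (intro allI impI)
    fix X assume X: "\<forall>k. X k \<in> UNIV - {t0}" and Xt: "X \<longlonglongrightarrow> t0"
    define Y where "Y k = (if \<bar>X k - t0\<bar> \<le> \<delta> then X k else t0 + \<delta>)" for k
    have ev: "\<forall>\<^sub>F k in sequentially. \<bar>X k - t0\<bar> \<le> \<delta>"
    proof -
      have "\<forall>\<^sub>F k in sequentially. dist (X k) t0 < \<delta>" using Xt dpos by (rule tendstoD)
      then show ?thesis by eventually_elim (simp add: dist_real_def)
    qed
    have evY: "\<forall>\<^sub>F k in sequentially. Y k = X k" using ev by eventually_elim (simp add: Y_def)
    have YX: "Y \<longlonglongrightarrow> t0"
      by (rule Lim_transform_eventually[OF Xt]) (use evY in \<open>auto elim: eventually_mono\<close>)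
    have Yab: "Y k \<in> {a..b}" for k using dpos by (auto simp: Y_def a_def b_def abs_le_iff)
    have Yne: "Y k \<noteq> t0" for k using X dpos by (auto simp: Y_def)
    have "(\<lambda>k. (\<Phi> (Y k) - \<Phi> t0) / (Y k - t0)) \<longlonglongrightarrow> L" by (rule lim[OF Yab Yne YX])
    then have "(\<lambda>k. (\<Phi> (X k) - \<Phi> t0) / (X k - t0)) \<longlonglongrightarrow> L"
      by (rule Lim_transform_eventually) (use evY in \<open>auto elim: eventually_mono\<close>)
    then show "((\<lambda>t. (\<Phi> t - \<Phi> t0) / (t - t0)) \<circ> X) \<longlonglongrightarrow> L" by (simp add: comp_def)
  qed
  then show ?thesis unfolding has_field_derivative_iff \<Phi>_def L_def t0_def by simp
qed

end


lemma eventually_upd_in_open: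
  assumes "open U" "z \<in> U"
  shows "\<forall>\<^sub>F t in nhds (z $ i). upd z i t \<in> U"
proof -
  obtain e where e: "e > 0" "ball z e \<subseteq> U" using assms open_contains_ball by blast
  show ?thesis unfolding eventually_nhds_metric
  proof (intro exI[of _ e] conjI allI impI)
    show "0 < e" by fact
    fix t assume "dist t (z $ i) < e"
    then have "dist (upd z i t) z < e" by (simp add: dist_upd0 dist_real_def)
    then show "upd z i t \<in> U" using e by (auto simp: dist_commute)
  qed
qed

lemma glue:
  fixes \<psi> c G G' :: "real ^ 'm \<Rightarrow> real" and U :: "(real ^ 'm) set"
  assumes U: "open U"
    and eq: "\<And>w. w \<in> U \<Longrightarrow> \<psi> w = c w + \<beta> * G w"
    and Gd: "\<And>z. z \<in> U \<Longrightarrow> ((\<lambda>t. G (upd z i t)) has_real_derivative G' z) (at (z $ i))"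
    and Gc: "continuous_on U G'"
    and cex: "\<And>z. z \<in> U \<Longrightarrow> Dp_ex i c z"
    and cc: "continuous_on U (Dp i c)"
  shows "(\<forall>z\<in>U. Dp_ex i \<psi> z) \<and> continuous_on U (Dp i \<psi>)"
proof -
  have der: "((\<lambda>t. \<psi> (upd z i t)) has_real_derivative (Dp i c z + \<beta> * G' z)) (at (z $ i))" if z: "z \<in> U" for z
  proof -
    have dc: "((\<lambda>t. c (upd z i t)) has_real_derivative Dp i c z) (at (z $ i))"
      using cex[OF z] unfolding Dp_ex_def Dp_def using DERIV_deriv_iff_real_differentiable by blast
    have d1: "((\<lambda>t. c (upd z i t) + \<beta> * G (upd z i t)) has_real_derivative (Dp i c z + \<beta> * G' z)) (at (z $ i))"
      by (intro DERIV_add DERIV_cmult dc Gd z)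
    have ev: "\<forall>\<^sub>F t in nhds (z $ i). c (upd z i t) + \<beta> * G (upd z i t) = \<psi> (upd z i t)"
      using eventually_upd_in_open[OF U z, of i] by eventually_elim (simp add: eq)
    show ?thesis by (rule DERIV_cong_ev[THEN iffD1, OF refl ev refl d1])
  qed
  have ex: "Dp_ex i \<psi> z" if "z \<in> U" for z
    using der[OF that] unfolding Dp_ex_def real_differentiable_def by blast
  have val: "Dp i \<psi> z = Dp i c z + \<beta> * G' z" if "z \<in> U" for z
    using der[OF that] unfolding Dp_def by (rule DERIV_imp_deriv)
  have "continuous_on U (\<lambda>z. Dp i c z + \<beta> * G' z)" by (intro continuous_intros cc Gc)
  then have "continuous_on U (Dp i \<psi>)" by (rule continuous_on_cong[THEN iffD1, rotated 2]) (auto simp: val)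
  with ex show ?thesis by blast
qed


lemma density_repr:
  fixes Zs :: "'a::euclidean_space set" and Q :: "'a measure" and g :: "'a \<Rightarrow> real"
  assumes Zs: "Zs \<in> sets borel"
    and sQ: "sets Q = sets (restrict_space borel Zs)" and pQ: "prob_space Q"
    and dg: "\<forall>B\<in>sets borel. B \<subseteq> Zs \<longrightarrow> set_integrable lborel B g \<and> measure Q B = (LINT x:B|lborel. g x)"
  shows "g \<in> borel_measurable (restrict_space lborel Zs)"
    "AE x in lborel. x \<in> Zs \<longrightarrow> 0 \<le> g x"
    "Q = density (restrict_space lborel Zs) (\<lambda>x. ennreal (g x))"
proof -
  interpret prob_space Q by fact
  have Zs': "Zs \<inter> space lborel \<in> sets lborel" using Zs by simp
  have si: "set_integrable lborel Zs g" using dg Zs by auto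
  then have phim: "(\<lambda>x. indicator Zs x *\<^sub>R g x) \<in> borel_measurable lborel"
    unfolding set_integrable_def by (rule borel_measurable_integrable)
  show gm: "g \<in> borel_measurable (restrict_space lborel Zs)"
    using phim borel_measurable_restrict_space_iff[OF Zs', of g] by simp
  define B where "B = {x. indicator Zs x * g x < (0::real)}"
  have Bs: "B \<in> sets borel"
  proof -
    have phib: "(\<lambda>x. indicator Zs x *\<^sub>R g x) \<in> borel_measurable borel"
      using phim by simp
    have "B = (\<lambda>x. indicator Zs x *\<^sub>R g x) -` {..<0} \<inter> space borel" by (auto simp: B_def)
    then show ?thesis using measurable_sets[OF phib, of "{..<0}"] by simp
  qed
  have BZ: "B \<subseteq> Zs" unfolding B_def by (auto simp: indicator_def)
  have Bg: "x \<in> B \<Longrightarrow> g x < 0" for x unfolding B_def by (cases "x \<in> Zs") auto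
  have sB: "set_integrable lborel B g" and mB: "measure Q B = (LINT x:B|lborel. g x)"
    using dg Bs BZ by auto
  have iB: "integrable lborel (\<lambda>x. - (indicator B x *\<^sub>R g x))"
    using sB unfolding set_integrable_def by simp
  have nnB: "AE x in lborel. 0 \<le> - (indicator B x *\<^sub>R g x)"
    by (rule AE_I2) (auto simp: indicator_def dest: Bg)
  have "integral\<^sup>L lborel (\<lambda>x. - (indicator B x *\<^sub>R g x)) = - measure Q B"
    using mB unfolding set_lebesgue_integral_def by simp
  moreover have "0 \<le> integral\<^sup>L lborel (\<lambda>x. - (indicator B x *\<^sub>R g x))"
    using nnB by (rule integral_nonneg_AE)
  ultimately have "integral\<^sup>L lborel (\<lambda>x. - (indicator B x *\<^sub>R g x)) = 0"
    using measure_nonneg[of Q B] by linarith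
  then have "AE x in lborel. - (indicator B x *\<^sub>R g x) = 0"
    using integral_nonneg_eq_0_iff_AE[OF iB nnB] by simp
  then have AEB: "AE x in lborel. x \<notin> B"
    by eventually_elim (auto simp: indicator_def dest: Bg)
  show nn: "AE x in lborel. x \<in> Zs \<longrightarrow> 0 \<le> g x"
    using AEB by eventually_elim (auto simp: B_def indicator_def not_less)
  show "Q = density (restrict_space lborel Zs) (\<lambda>x. ennreal (g x))"
  proof (rule measure_eqI)
    show "sets Q = sets (density (restrict_space lborel Zs) (\<lambda>x. ennreal (g x)))"
      using sQ by (simp add: sets_restrict_space)
    fix A assume A: "A \<in> sets Q"
    then have As: "A \<in> sets borel" "A \<subseteq> Zs"
      using sQ sets_restrict_space_iff[of Zs borel A] Zs by auto
    have "emeasure Q A = ennreal (LINT x:A|lborel. g x)"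
      using dg As by (simp add: emeasure_eq_measure)
    also have "\<dots> = (\<integral>\<^sup>+ x. ennreal (indicator A x *\<^sub>R g x) \<partial>lborel)"
    proof -
      have "set_integrable lborel A g" using dg As by auto
      then show ?thesis unfolding set_lebesgue_integral_def set_integrable_def
        by (subst nn_integral_eq_integral) (use AEB As in \<open>auto elim!: eventually_mono simp: indicator_def B_def not_less\<close>)
    qed
    also have "\<dots> = (\<integral>\<^sup>+ x. ennreal (g x) * indicator A x \<partial>restrict_space lborel Zs)"
    proof -
      have "(\<integral>\<^sup>+ x. ennreal (g x) * indicator A x \<partial>restrict_space lborel Zs)
          = (\<integral>\<^sup>+ x. ennreal (g x) * indicator A x * indicator Zs x \<partial>lborel)"
        by (rule nn_integral_restrict_space[OF Zs'])
      also have "\<dots> = (\<integral>\<^sup>+ x. ennreal (indicator A x *\<^sub>R g x) \<partial>lborel)"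
        by (rule nn_integral_cong) (use As in \<open>auto simp: indicator_def\<close>)
      finally show ?thesis by simp
    qed
    also have "\<dots> = emeasure (density (restrict_space lborel Zs) (\<lambda>x. ennreal (g x))) A"
    proof (rule emeasure_density[symmetric])
      show "(\<lambda>x. ennreal (g x)) \<in> borel_measurable (restrict_space lborel Zs)" using gm by simp
      show "A \<in> sets (restrict_space lborel Zs)" using As Zs by (simp add: sets_restrict_space_iff)
    qed
    finally show "emeasure Q A = emeasure (density (restrict_space lborel Zs) (\<lambda>x. ennreal (g x))) A" .
  qed
qed

lemma density_int:
  fixes Zs :: "'a::euclidean_space set" and Q :: "'a measure" and g h :: "'a \<Rightarrow> real"
  assumes Zs: "Zs \<in> sets borel"
    and sQ: "sets Q = sets (restrict_space borel Zs)" and pQ: "prob_space Q"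
    and dg: "\<forall>B\<in>sets borel. B \<subseteq> Zs \<longrightarrow> set_integrable lborel B g \<and> measure Q B = (LINT x:B|lborel. g x)"
    and hm: "h \<in> borel_measurable (restrict_space borel Zs)"
    and hi: "integrable Q h"
  shows "set_integrable lborel Zs (\<lambda>x. h x * g x)" "integral\<^sup>L Q h = (LINT x:Zs|lborel. h x * g x)"
proof -
  note D = density_repr[OF Zs sQ pQ dg]
  have Zs': "Zs \<inter> space lborel \<in> sets lborel" using Zs by simp
  let ?N = "restrict_space lborel Zs"
  have hm': "h \<in> borel_measurable ?N"
    using hm by (simp add: sets_restrict_space cong: measurable_cong_sets)
  have nnN: "AE x in ?N. 0 \<le> g x" using D(2) AE_restrict_space_iff[OF Zs'] by simp
  have "integrable (density ?N (\<lambda>x. ennreal (g x))) h" using hi D(3) by simp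
  then have "integrable ?N (\<lambda>x. g x *\<^sub>R h x)"
    using integrable_density[OF hm' D(1) nnN] by simp
  then show "set_integrable lborel Zs (\<lambda>x. h x * g x)"
    unfolding set_integrable_def using integrable_restrict_space[OF Zs', of "\<lambda>x. g x * h x"] by (simp add: mult.commute)
  have "integral\<^sup>L Q h = integral\<^sup>L (density ?N (\<lambda>x. ennreal (g x))) h" using D(3) by simp
  also have "\<dots> = integral\<^sup>L ?N (\<lambda>x. g x *\<^sub>R h x)" by (rule integral_density[OF hm' D(1) nnN])
  also have "\<dots> = (LINT x:Zs|lborel. h x * g x)"
    unfolding set_lebesgue_integral_def using integral_restrict_space[OF Zs', of "\<lambda>x. g x * h x"] by (simp add: mult.commute)
  finally show "integral\<^sup>L Q h = (LINT x:Zs|lborel. h x * g x)" .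
qed


lemma absmult_int:
  fixes r D :: "'a::euclidean_space \<Rightarrow> real"
  assumes i: "set_integrable lborel Zs (\<lambda>x. r x * D x)"
    and rm: "(\<lambda>x. indicator Zs x * r x) \<in> borel_measurable lborel"
    and Dm: "(\<lambda>x. indicator Zs x * D x) \<in> borel_measurable lborel"
  shows "set_integrable lborel Zs (\<lambda>x. \<bar>r x\<bar> * D x)"
  unfolding set_integrable_def
proof (rule Bochner_Integration.integrable_bound[OF i[unfolded set_integrable_def]])
  have "(\<lambda>x. indicator Zs x *\<^sub>R (\<bar>r x\<bar> * D x)) = (\<lambda>x. \<bar>indicator Zs x * r x\<bar> * (indicator Zs x * D x))"
    by (rule ext) (simp add: indicator_def)
  then show "(\<lambda>x. indicator Zs x *\<^sub>R (\<bar>r x\<bar> * D x)) \<in> borel_measurable lborel"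
    using rm Dm by simp
  show "AE x in lborel. norm (indicator Zs x *\<^sub>R (\<bar>r x\<bar> * D x)) \<le> norm (indicator Zs x *\<^sub>R (r x * D x))"
    by (rule AE_I2) (simp add: abs_mult)
qed

theorem proposition4:
  fixes Zs :: "(real ^ 'm) set"
    and P :: "real ^ 'm \<Rightarrow> (real ^ 'm) measure"
    and f :: "real ^ 'm \<Rightarrow> real ^ 'm \<Rightarrow> real"
    and M :: "real ^ 'm \<Rightarrow> 'w measure"
    and F :: "nat \<Rightarrow> 'w measure"
    and Z :: "nat \<Rightarrow> 'w \<Rightarrow> real ^ 'm"
    and \<beta> :: real and r c g :: "real ^ 'm \<Rightarrow> real"
    and n :: nat and mbar d m' d' :: real
  defines "S \<equiv> restrict_space borel Zs"
  defines "k2 \<equiv> (\<lambda>z. enn2real (ell P S n m' d' g r c z))"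
  assumes Zs_borel: "Zs \<in> sets borel"
    and kernel: "P \<in> S \<rightarrow>\<^sub>M prob_algebra S"
    and Markov_prob: "\<forall>z\<in>Zs. prob_space (M z)"
    and Markov_filt: "\<forall>z\<in>Zs. filtration (space (M z)) F \<and> (\<forall>t. subalgebra (M z) (F t))"
    and Markov_adapted: "\<forall>t. Z t \<in> F t \<rightarrow>\<^sub>M S"
    and Markov_init: "\<forall>z\<in>Zs. AE \<omega> in M z. Z 0 \<omega> = z"
    and Markov_trans: "\<forall>z\<in>Zs. \<forall>t. \<forall>B\<in>sets S. AE \<omega> in M z.
           real_cond_exp (M z) (F t) (\<lambda>\<omega>. indicator B (Z (Suc t) \<omega>)) \<omega> = measure (P (Z t \<omega>)) B"
    and beta: "0 < \<beta>" "\<beta> < 1"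
    and r_meas: "r \<in> borel_measurable S" and c_meas: "c \<in> borel_measurable S"
    and A_g: "g \<in> borel_measurable S" "\<forall>z. 0 \<le> g z"
    and A_par: "0 \<le> mbar" "0 \<le> d" "\<beta> * mbar < 1"
    and A_r: "\<forall>z\<in>Zs. (\<integral>\<^sup>+ z'. ennreal \<bar>r z'\<bar> \<partial>(kpow P S n z)) \<le> ennreal (g z)"
    and A_c: "\<forall>z\<in>Zs. (\<integral>\<^sup>+ z'. ennreal \<bar>c z'\<bar> \<partial>(kpow P S n z)) \<le> ennreal (g z)"
    and A_drift: "\<forall>z\<in>Zs. (\<integral>\<^sup>+ z'. ennreal (g z') \<partial>(P z)) \<le> ennreal (mbar * g z + d)"
    and mdpos: "0 < m'" "0 < d'"
    and mcond: "mbar + 2 * m' > 1" "\<beta> * (mbar + 2 * m') < 1" "d' \<ge> d / (mbar + 2 * m' - 1)"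
    and ell_finite: "\<forall>z\<in>Zs. ell P S n m' d' g r c z < \<infinity>"
    and dens: "\<forall>z\<in>Zs. \<forall>B\<in>sets borel. B \<subseteq> Zs \<longrightarrow>
           set_integrable lborel B (\<lambda>z'. f z' z) \<and> measure (P z) B = (LINT z':B|lborel. f z' z)"
    and a2: "\<forall>i. \<forall>z\<in>interior Zs. \<forall>z'\<in>Zs. Dp2_ex i (\<lambda>x. f z' x) z"
    and a_cont: "\<forall>i. continuous_on (interior Zs \<times> Zs) (\<lambda>(z, z'). Dp i (\<lambda>x. f z' x) z)"
    and b_fin: "\<forall>i. \<forall>z'\<in>Zs. \<forall>z.
           finite {t. upd z i t \<in> interior Zs \<and> Dp i (Dp i (\<lambda>x. f z' x)) (upd z i t) = 0}"
    and b_loc: "\<forall>i. \<forall>z0\<in>interior Zs. \<exists>\<delta>>0. \<exists>A. compact A \<and> A \<subseteq> Zs \<and>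
           (\<forall>z'\<in>Zs - A. \<forall>t. upd z0 i t \<in> interior Zs \<and> Dp i (Dp i (\<lambda>x. f z' x)) (upd z0 i t) = 0
               \<longrightarrow> \<bar>t - z0 $ i\<bar> \<ge> \<delta>)"
    and c_ex: "\<forall>i. \<forall>z\<in>interior Zs. Dp_ex i c z"
    and c_cont: "\<forall>i. continuous_on (interior Zs) (Dp i c)"
    and d_cont: "continuous_on Zs r" "continuous_on Zs k2"
    and d_int1: "\<forall>i. \<forall>z\<in>interior Zs. set_integrable lborel Zs (\<lambda>z'. r z' * Dp i (\<lambda>x. f z' x) z)"
    and d_cont1: "\<forall>i. continuous_on (interior Zs)
           (\<lambda>z. LINT z':Zs|lborel. \<bar>r z' * Dp i (\<lambda>x. f z' x) z\<bar>)"
    and d_int2: "\<forall>i. \<forall>z\<in>interior Zs. set_integrable lborel Zs (\<lambda>z'. k2 z' * Dp i (\<lambda>x. f z' x) z)"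
    and d_cont2: "\<forall>i. continuous_on (interior Zs)
           (\<lambda>z. LINT z':Zs|lborel. \<bar>k2 z' * Dp i (\<lambda>x. f z' x) z\<bar>)"
  shows "\<forall>i. (\<forall>z\<in>interior Zs. Dp_ex i (psistar P M F Z \<beta> r c) z)
             \<and> continuous_on (interior Zs) (Dp i (psistar P M F Z \<beta> r c))"
proof -
  have Zsp: "space S = Zs" by (simp add: S_def space_restrict_space)
  have Zs': "Zs \<inter> space borel \<in> sets borel" using Zs_borel by simp
  have i1: "\<And>z. z \<in> space S \<Longrightarrow> prob_space (M z)" using Markov_prob Zsp by simp
  have i2: "\<And>z. z \<in> space S \<Longrightarrow> filtration (space (M z)) F \<and> (\<forall>t. subalgebra (M z) (F t))"
    using Markov_filt Zsp by simp
  have i3: "\<And>t. Z t \<in> F t \<rightarrow>\<^sub>M S" using Markov_adapted by blast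
  have i4: "\<And>z. z \<in> space S \<Longrightarrow> AE \<omega> in M z. Z 0 \<omega> = z" using Markov_init Zsp by simp
  have i5: "\<And>z t B. z \<in> space S \<Longrightarrow> B \<in> sets S \<Longrightarrow> AE \<omega> in M z.
           real_cond_exp (M z) (F t) (\<lambda>\<omega>. indicator B (Z (Suc t) \<omega>)) \<omega> = measure (P (Z t \<omega>)) B"
    using Markov_trans Zsp by simp
  interpret mk S P M F Z by (rule mk.intro[OF kernel i1 i2 i3 i4 i5])
  interpret mk2 S P M F Z \<beta> r c g n mbar d m' d'
  proof unfold_locales
    show "0 < \<beta>" "\<beta> < 1" by (rule beta)+
    show "r \<in> borel_measurable S" "c \<in> borel_measurable S" "g \<in> borel_measurable S" by (rule r_meas c_meas A_g)+
    show "\<And>z. 0 \<le> g z" using A_g by blast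
    show "0 \<le> mbar" "0 \<le> d" by (rule A_par)+
    show "0 < m'" "0 < d'" by (rule mdpos)+
    show "mbar + 2 * m' > 1" "\<beta> * (mbar + 2 * m') < 1" "d' \<ge> d / (mbar + 2 * m' - 1)" by (rule mcond)+
    fix z assume z: "z \<in> space S"
    then have z': "z \<in> Zs" using Zsp by simp
    show "(\<integral>\<^sup>+ z'. ennreal \<bar>r z'\<bar> \<partial>(kpow P S n z)) \<le> ennreal (g z)" using A_r z' by blast
    show "(\<integral>\<^sup>+ z'. ennreal \<bar>c z'\<bar> \<partial>(kpow P S n z)) \<le> ennreal (g z)" using A_c z' by blast
    show "(\<integral>\<^sup>+ z'. ennreal (g z') \<partial>(P z)) \<le> ennreal (mbar * g z + d)" using A_drift z' by blast
  qed
  define V where "V = vstar M F Z \<beta> r c"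
  define H where "H x = \<bar>r x\<bar> + Kc * k2 x" for x
  have k2nn: "0 \<le> k2 x" for x by (simp add: k2_def)
  have VH: "\<bar>V x\<bar> \<le> H x" if "x \<in> Zs" for x
    using vstar_abs(2)[of x] that ell_finite Zsp by (simp add: V_def H_def k2_def)
  have Hc: "continuous_on Zs H"
    unfolding H_def using d_cont by (intro continuous_intros) auto
  have Pz: "sets (P z) = sets S" "prob_space (P z)" if "z \<in> Zs" for z
    using measurable_space[OF kernel, of z] that Zsp by (auto simp: space_prob_algebra)
  let ?U = "interior Zs"
  have UZ: "?U \<subseteq> Zs" by (rule interior_subset)
  have rm: "(\<lambda>x. indicator Zs x * r x) \<in> borel_measurable lborel"
    using r_meas borel_measurable_restrict_space_iff[OF Zs', of r] by (simp add: S_def)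
  have Dm: "(\<lambda>z'. indicator Zs z' * Dp i (\<lambda>x. f z' x) z) \<in> borel_measurable lborel"
    if z: "z \<in> ?U" for z i
  proof -
    have "continuous_on Zs (\<lambda>z'. (z, z'))" by (intro continuous_intros)
    from continuous_on_compose2[OF a_cont[rule_format, of i] this] z
    have "continuous_on Zs (\<lambda>z'. Dp i (\<lambda>x. f z' x) z)" by auto
    from borel_measurable_continuous_on_indicator[OF Zs_borel this] show ?thesis by simp
  qed
  have main: "\<exists>G G'. (\<forall>w\<in>?U. psistar P M F Z \<beta> r c w = c w + \<beta> * G w)
      \<and> (\<forall>z\<in>?U. ((\<lambda>t. G (upd z i t)) has_real_derivative G' z) (at (z $ i)))
      \<and> continuous_on ?U G'" for i
  proof (cases "V \<in> borel_measurable S")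
    case False
    have "integral\<^sup>L (P w) V = 0" if "w \<in> Zs" for w
    proof (rule not_integrable_integral_eq)
      show "\<not> integrable (P w) V"
        using False Pz(1)[OF that] by (auto cong: measurable_cong_sets)
    qed
    then have "\<forall>w\<in>?U. psistar P M F Z \<beta> r c w = c w + \<beta> * (\<lambda>_. 0) w"
      using UZ by (auto simp: psistar_def V_def)
    then show ?thesis by (intro exI[of _ "\<lambda>_. 0"] exI[of _ "\<lambda>_. 0"]) auto
  next
    case True
    have Vint: "integrable (P w) V" if w: "w \<in> Zs" for w
    proof -
      have Vm': "V \<in> borel_measurable (P w)" using True Pz(1)[OF w] by (simp cong: measurable_cong_sets)
      have "(\<integral>\<^sup>+x. ennreal (norm (V x)) \<partial>P w) \<le> (\<integral>\<^sup>+x. Bf P S \<beta> r c x \<partial>P w)"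
      proof (rule nn_integral_mono)
        fix x assume "x \<in> space (P w)"
        then have x: "x \<in> Zs" using Pz(1)[OF w] sets_eq_imp_space_eq Zsp by metis
        have fin: "Bf P S \<beta> r c x < \<infinity>" using vstar_abs(1)[of x] x Zsp ell_finite by simp
        have "\<bar>V x\<bar> \<le> enn2real (Bf P S \<beta> r c x)" using vstar_abs(3)[of x] x Zsp ell_finite by (simp add: V_def)
        then have "ennreal \<bar>V x\<bar> \<le> ennreal (enn2real (Bf P S \<beta> r c x))" by (rule ennreal_leI)
        also have "\<dots> = Bf P S \<beta> r c x" using fin by simp
        finally show "ennreal (norm (V x)) \<le> Bf P S \<beta> r c x" by simp
      qed
      also have "\<dots> < \<infinity>"
      proof -
        have "ennreal \<beta> * (\<integral>\<^sup>+x. Bf P S \<beta> r c x \<partial>P w) < \<infinity>"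
          using int_Bf[of w] vstar_abs(1)[of w] w Zsp ell_finite by (auto intro: le_less_trans)
        then show ?thesis using beta by (auto simp: ennreal_mult_less_top)
      qed
      finally show ?thesis by (rule integrableI_bounded[OF Vm'])
    qed
    have dw: "\<forall>B\<in>sets borel. B \<subseteq> Zs \<longrightarrow> set_integrable lborel B (\<lambda>x. f x w) \<and> measure (P w) B = (LINT x:B|lborel. f x w)"
      if "w \<in> Zs" for w using dens that by blast
    have DI: "set_integrable lborel Zs (\<lambda>x. V x * f x w) \<and> integral\<^sup>L (P w) V = (LINT x:Zs|lborel. V x * f x w)"
      if w: "w \<in> Zs" for w
      using density_int[OF Zs_borel _ Pz(2)[OF w] dw[OF w], of V] Pz(1)[OF w] True Vint[OF w]
      by (simp add: S_def)
    interpret A: ana Zs f V H i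
    proof unfold_locales
      show "Zs \<in> sets borel" by (rule Zs_borel)
      show "(\<lambda>x. indicator Zs x * V x) \<in> borel_measurable lborel"
        using True borel_measurable_restrict_space_iff[OF Zs', of V] by (simp add: S_def)
      show "\<And>x. x \<in> Zs \<Longrightarrow> \<bar>V x\<bar> \<le> H x" by (rule VH)
      show "continuous_on Zs H" by (rule Hc)
      show "\<And>z z'. z \<in> ?U \<Longrightarrow> z' \<in> Zs \<Longrightarrow> Dp2_ex i (\<lambda>x. f z' x) z" using a2 by blast
      show "continuous_on (?U \<times> Zs) (\<lambda>(z, z'). Dp i (\<lambda>x. f z' x) z)" using a_cont by blast
      show "\<And>z0. z0 \<in> ?U \<Longrightarrow> \<exists>\<delta>>0. \<exists>A. compact A \<and> A \<subseteq> Zs \<and>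
           (\<forall>z'\<in>Zs - A. \<forall>t. upd z0 i t \<in> ?U \<and> Dp i (Dp i (\<lambda>x. f z' x)) (upd z0 i t) = 0
               \<longrightarrow> \<bar>t - z0 $ i\<bar> \<ge> \<delta>)" using b_loc by blast
      show "\<And>z. z \<in> ?U \<Longrightarrow> set_integrable lborel Zs (\<lambda>z'. V z' * f z' z)"
        using DI UZ by blast
      fix z assume z: "z \<in> ?U"
      have i1: "set_integrable lborel Zs (\<lambda>z'. \<bar>r z'\<bar> * Dp i (\<lambda>x. f z' x) z)"
        by (rule absmult_int[OF _ rm Dm[OF z]]) (use d_int1 z in blast)
      have i2: "set_integrable lborel Zs (\<lambda>z'. Kc * (k2 z' * Dp i (\<lambda>x. f z' x) z))"
        using d_int2 z by (intro set_integrable_mult_right) blast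
      have "set_integrable lborel Zs (\<lambda>z'. \<bar>r z'\<bar> * Dp i (\<lambda>x. f z' x) z + Kc * (k2 z' * Dp i (\<lambda>x. f z' x) z))"
        using i1 i2 by (rule set_integral_add)
      then show "set_integrable lborel Zs (\<lambda>z'. H z' * Dp i (\<lambda>x. f z' x) z)"
        by (simp add: H_def distrib_right mult.assoc)
    next
      have eq: "(LINT z':Zs|lborel. \<bar>H z' * Dp i (\<lambda>x. f z' x) z\<bar>)
          = (LINT z':Zs|lborel. \<bar>r z' * Dp i (\<lambda>x. f z' x) z\<bar>) + Kc * (LINT z':Zs|lborel. \<bar>k2 z' * Dp i (\<lambda>x. f z' x) z\<bar>)"
        if z: "z \<in> ?U" for z
      proof -
        have j1: "set_integrable lborel Zs (\<lambda>z'. \<bar>r z' * Dp i (\<lambda>x. f z' x) z\<bar>)"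
          using d_int1 z by (intro set_integrable_abs) blast
        have j2: "set_integrable lborel Zs (\<lambda>z'. Kc * \<bar>k2 z' * Dp i (\<lambda>x. f z' x) z\<bar>)"
          using d_int2 z by (intro set_integrable_mult_right set_integrable_abs) blast
        have "(LINT z':Zs|lborel. \<bar>H z' * Dp i (\<lambda>x. f z' x) z\<bar>)
            = (LINT z':Zs|lborel. \<bar>r z' * Dp i (\<lambda>x. f z' x) z\<bar> + Kc * \<bar>k2 z' * Dp i (\<lambda>x. f z' x) z\<bar>)"
        proof -
          have "\<bar>H z' * Dp i (\<lambda>x. f z' x) z\<bar> = \<bar>r z' * Dp i (\<lambda>x. f z' x) z\<bar> + Kc * \<bar>k2 z' * Dp i (\<lambda>x. f z' x) z\<bar>" for z'
          proof -
            have h0: "0 \<le> H z'" using k2nn[of z'] Kc_pos by (simp add: H_def)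
            have "\<bar>H z' * Dp i (\<lambda>x. f z' x) z\<bar> = H z' * \<bar>Dp i (\<lambda>x. f z' x) z\<bar>" using h0 by (simp add: abs_mult)
            also have "\<dots> = \<bar>r z'\<bar> * \<bar>Dp i (\<lambda>x. f z' x) z\<bar> + Kc * (k2 z' * \<bar>Dp i (\<lambda>x. f z' x) z\<bar>)"
              by (simp add: H_def algebra_simps)
            also have "\<dots> = \<bar>r z' * Dp i (\<lambda>x. f z' x) z\<bar> + Kc * \<bar>k2 z' * Dp i (\<lambda>x. f z' x) z\<bar>"
              using k2nn[of z'] by (simp add: abs_mult)
            finally show ?thesis .
          qed
          then show ?thesis by simp
        qed
        also have "\<dots> = (LINT z':Zs|lborel. \<bar>r z' * Dp i (\<lambda>x. f z' x) z\<bar>) + (LINT z':Zs|lborel. Kc * \<bar>k2 z' * Dp i (\<lambda>x. f z' x) z\<bar>)"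
          by (rule set_integral_add(2)[OF j1 j2])
        finally show ?thesis by simp
      qed
      have "continuous_on ?U (\<lambda>z. (LINT z':Zs|lborel. \<bar>r z' * Dp i (\<lambda>x. f z' x) z\<bar>) + Kc * (LINT z':Zs|lborel. \<bar>k2 z' * Dp i (\<lambda>x. f z' x) z\<bar>))"
        using d_cont1 d_cont2 by (intro continuous_intros) auto
      then show "continuous_on ?U (\<lambda>z. LINT z':Zs|lborel. \<bar>H z' * Dp i (\<lambda>x. f z' x) z\<bar>)"
        by (rule continuous_on_cong[THEN iffD1, rotated 2]) (auto simp: eq)
    qed
    have g1: "\<forall>w\<in>?U. psistar P M F Z \<beta> r c w = c w + \<beta> * (LINT x:Zs|lborel. V x * f x w)"
      using DI UZ by (auto simp: psistar_def V_def)
    have g2: "\<forall>z\<in>?U. ((\<lambda>t. LINT x:Zs|lborel. V x * f x (upd z i t)) has_real_derivative (LINT z':Zs|lborel. V z' * Dp i (\<lambda>x. f z' x) z)) (at (z $ i))"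
      using A.deriv_int by blast
    have g3: "continuous_on ?U (\<lambda>z. LINT z':Zs|lborel. V z' * Dp i (\<lambda>x. f z' x) z)" by (rule A.cont_deriv)
    show ?thesis
      by (rule exI[of _ "\<lambda>w. LINT x:Zs|lborel. V x * f x w"], rule exI[of _ "\<lambda>z. LINT z':Zs|lborel. V z' * Dp i (\<lambda>x. f z' x) z"])
         (use g1 g2 g3 in simp)
  qed
  show ?thesis
  proof
    fix i
    from main[of i] obtain G G' where GG: "\<forall>w\<in>?U. psistar P M F Z \<beta> r c w = c w + \<beta> * G w"
      "\<forall>z\<in>?U. ((\<lambda>t. G (upd z i t)) has_real_derivative G' z) (at (z $ i))" "continuous_on ?U G'"
      by blast
    show "(\<forall>z\<in>?U. Dp_ex i (psistar P M F Z \<beta> r c) z) \<and> continuous_on ?U (Dp i (psistar P M F Z \<beta> r c))"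
      by (rule glue[OF open_interior]) (use GG c_ex c_cont in auto)
  qed
qed


end
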